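(* For every environment $\Gamma=(c,\mu)$ (as described in the context), $$\mathbf{\Pi}(\Gamma)=\left\{(\pi_b,\pi_s)\in\mathbb{R}^2:\ \pi_b\ge 0,\ \ \pi_s\ge \underline{\pi}_s(\Gamma),\ \ \pi_b+\pi_s\le S(\Gamma)\right\}.$$
   Context: Environment: $V\subset\mathbb{R}$ is compact with $\underline v=\min V<\max V=\overline v$; $\mu$ is a probability measure on $\mathbb{R}$ with support $V$; $c:V\to\mathbb{R}$ is continuous with $v-c(v)\ge 0$ for all $v\in V$ and $\mathbb{E}_\mu[v-c(v)]>0$. Write $\Gamma=(c,\mu)$; all expectations are under $\mu$. Let $S(\Gamma)=\mathbb{E}[v-c(v)]$ and $\underline{\pi}_s(\Gamma)=\max\{\underline v-\mathbb{E}[c(v)],0\}$. An information structure $\tau$ consists of complete separable metric spaces $T_s,T_b$ (with Borel $\sigma$-algebras) and a probability distribution $P$ on $T_s\times T_b\times V$ whose marginal on $V$ is $\mu$. Game $(\Gamma,\tau)$: $(t_s,t_b,v)\sim P$ is drawn; Seller privately observes $t_s$ and posts a price $p\in\mathbb{R}$; Buyer privately observes $t_b$, sees $p$, and accepts or rejects. If Buyer accepts, payoffs are $v-p$ (Buyer) and $p-c(v)$ (Seller); otherwise both get $0$. Seller's strategy is a distributional strategy $\sigma$: a joint distribution on $\mathbb{R}\times T_s$ whose $T_s$-marginal equals the marginal of $P$ on $T_s$, with conditional $\sigma(\cdot|t_s)$. Buyer's strategy is a measurable $\alpha:\mathbb{R}\times T_b\to[0,1]$ (probability of accepting). Buyer's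 beliefs are $\nu(\cdot|p,t_b)\in\Delta(V)$. Ex ante payoffs are $\pi_b=\int (v-p)\alpha(p,t_b)\sigma(dp|t_s)P(dt_s,dt_b,dv)$ and $\pi_s=\int (p-c(v))\alpha(p,t_b)\sigma(dp|t_s)P(dt_s,dt_b,dv)$. A weak perfect Bayesian equilibrium (wPBE) is $(\sigma,\alpha,\nu)$ such that: (1) for every $(p,t_b)$, $\alpha(p,t_b)=1$ if $\mathbb{E}_{\nu(\cdot|p,t_b)}[v]>p$ and $\alpha(p,t_b)=0$ if $\mathbb{E}_{\nu(\cdot|p,t_b)}[v]<p$; (2) $\sigma$ maximizes Seller's ex ante payoff given $\alpha$ over all distributional strategies; (3) for every measurable $D\subseteq\mathbb{R}\times T_s\times T_b\times V$, $\int_D\nu(dv|p,t_b)\sigma(dp|t_s)P(dt_s,dt_b,V)=\int_D\sigma(dp|t_s)P(dt_s,dt_b,dv)$. $\Pi(\Gamma,\tau)$ is the set of payoff pairs $(\pi_b,\pi_s)$ of wPBE of $(\Gamma,\tau)$, and $\mathbf{\Pi}(\Gamma)=\bigcup_\tau\Pi(\Gamma,\tau)$ over all information structures. *)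

theory Defs
  imports "HOL-Probability.Probability"
begin

definition support_of :: "real measure \<Rightarrow> real set" where
  "support_of \<mu> = {x. \<forall>U. open U \<and> x \<in> U \<longrightarrow> emeasure \<mu> U > 0}"

text \<open>The cost function is only given on V; outside V it is set to 0 (irrelevant,
since all relevant distributions are concentrated on V).\<close>
definition costV :: "real set \<Rightarrow> (real \<Rightarrow> real) \<Rightarrow> real \<Rightarrow> real" where
  "costV V c v = (if v \<in> V then c v else 0)"

definition surplus :: "real measure \<Rightarrow> real set \<Rightarrow> (real \<Rightarrow> real) \<Rightarrow> real" where
  "surplus \<mu> V c = (\<integral>v. v - costV V c v \<partial>\<mu>)"

definition seller_floor :: "real measure \<Rightarrow> real set \<Rightarrow> (real \<Rightarrow> real) \<Rightarrow> real" where
  "seller_floor \<mu> V c = max (Inf V - (\<integral>v. costV V c v \<partial>\<mu>)) 0"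

definition target_set :: "real measure \<Rightarrow> real set \<Rightarrow> (real \<Rightarrow> real) \<Rightarrow> (real \<times> real) set" where
  "target_set \<mu> V c = {(pb, ps). pb \<ge> 0 \<and> ps \<ge> seller_floor \<mu> V c \<and> pb + ps \<le> surplus \<mu> V c}"

definition info_structure ::
  "real measure \<Rightarrow> ('ts::topological_space \<times> 'tb::topological_space \<times> real) measure \<Rightarrow> bool" where
  "info_structure \<mu> P \<longleftrightarrow> prob_space P \<and> sets P = sets borel \<and>
     distr P borel (\<lambda>x. snd (snd x)) = \<mu>"

definition seller_strategy :: "('ts::topological_space \<Rightarrow> real measure) \<Rightarrow> bool" where
  "seller_strategy \<sigma> \<longleftrightarrow> \<sigma> \<in> measurable borel (prob_algebra borel)"

definition joint ::
  "('ts::topological_space \<times> 'tb::topological_space \<times> real) measure \<Rightarrow> ('ts \<Rightarrow> real measure)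
    \<Rightarrow> (real \<times> 'ts \<times> 'tb \<times> real) measure" where
  "joint P \<sigma> = P \<bind> (\<lambda>(ts, tb, v). \<sigma> ts \<bind> (\<lambda>p. return borel (p, ts, tb, v)))"

definition belief_joint ::
  "('ts::topological_space \<times> 'tb::topological_space \<times> real) measure \<Rightarrow> ('ts \<Rightarrow> real measure)
    \<Rightarrow> (real \<times> 'tb \<Rightarrow> real measure) \<Rightarrow> (real \<times> 'ts \<times> 'tb \<times> real) measure" where
  "belief_joint P \<sigma> \<nu> = P \<bind> (\<lambda>(ts, tb, v). \<sigma> ts \<bind>
      (\<lambda>p. \<nu> (p, tb) \<bind> (\<lambda>w. return borel (p, ts, tb, w))))"

definition seller_integrand ::
  "real set \<Rightarrow> (real \<Rightarrow> real) \<Rightarrow> (real \<times> 'tb \<Rightarrow> real) \<Rightarrow> real \<times> 'ts \<times> 'tb \<times> real \<Rightarrow> real" where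
  "seller_integrand V c \<alpha> = (\<lambda>(p, ts, tb, v). (p - costV V c v) * \<alpha> (p, tb))"

definition buyer_integrand ::
  "(real \<times> 'tb \<Rightarrow> real) \<Rightarrow> real \<times> 'ts \<times> 'tb \<times> real \<Rightarrow> real" where
  "buyer_integrand \<alpha> = (\<lambda>(p, ts, tb, v). (v - p) * \<alpha> (p, tb))"

definition seller_payoff where
  "seller_payoff V c P \<sigma> \<alpha> = integral\<^sup>L (joint P \<sigma>) (seller_integrand V c \<alpha>)"

definition buyer_payoff where
  "buyer_payoff P \<sigma> \<alpha> = integral\<^sup>L (joint P \<sigma>) (buyer_integrand \<alpha>)"

text \<open>Deviations with non-integrable payoff are excluded: their payoff is -\<infinity> (the
positive part of the Seller's payoff is bounded), so they are never profitable.\<close>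
definition wPBE ::
  "real set \<Rightarrow> (real \<Rightarrow> real) \<Rightarrow> ('ts::topological_space \<times> 'tb::topological_space \<times> real) measure
    \<Rightarrow> ('ts \<Rightarrow> real measure) \<Rightarrow> (real \<times> 'tb \<Rightarrow> real) \<Rightarrow> (real \<times> 'tb \<Rightarrow> real measure) \<Rightarrow> bool" where
  "wPBE V c P \<sigma> \<alpha> \<nu> \<longleftrightarrow>
     seller_strategy \<sigma> \<and>
     \<alpha> \<in> borel_measurable borel \<and> (\<forall>x. 0 \<le> \<alpha> x \<and> \<alpha> x \<le> 1) \<and>
     \<nu> \<in> measurable borel (prob_algebra borel) \<and> (\<forall>x. measure (\<nu> x) V = 1) \<and>
     (\<forall>p tb. ((\<integral>v. v \<partial>\<nu> (p, tb)) > p \<longrightarrow> \<alpha> (p, tb) = 1) \<and>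
             ((\<integral>v. v \<partial>\<nu> (p, tb)) < p \<longrightarrow> \<alpha> (p, tb) = 0)) \<and>
     integrable (joint P \<sigma>) (seller_integrand V c \<alpha>) \<and>
     (\<forall>\<sigma>'. seller_strategy \<sigma>' \<and> integrable (joint P \<sigma>') (seller_integrand V c \<alpha>) \<longrightarrow>
        seller_payoff V c P \<sigma>' \<alpha> \<le> seller_payoff V c P \<sigma> \<alpha>) \<and>
     belief_joint P \<sigma> \<nu> = joint P \<sigma>"

definition eq_payoffs ::
  "real set \<Rightarrow> (real \<Rightarrow> real) \<Rightarrow> ('ts::topological_space \<times> 'tb::topological_space \<times> real) measure
    \<Rightarrow> (real \<times> real) set" where
  "eq_payoffs V c P = {(buyer_payoff P \<sigma> \<alpha>, seller_payoff V c P \<sigma> \<alpha>) | \<sigma> \<alpha> \<nu>. wPBE V c P \<sigma> \<alpha> \<nu>}"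

text \<open>Union over information structures, with type spaces T_s = T_b = \<real>
(every Polish space is Borel isomorphic to a Borel subset of \<real>).\<close>
definition all_eq_payoffs :: "real measure \<Rightarrow> real set \<Rightarrow> (real \<Rightarrow> real) \<Rightarrow> (real \<times> real) set" where
  "all_eq_payoffs \<mu> V c = \<Union>{eq_payoffs V c P | P :: (real \<times> real \<times> real) measure. info_structure \<mu> P}"

end

theory Submission
  imports Defs
begin

definition Kj :: "('ts \<Rightarrow> real measure) \<Rightarrow> ('ts::topological_space \<times> 'tb::topological_space \<times> real) \<Rightarrow> (real \<times> 'ts \<times> 'tb \<times> real) measure" where
  "Kj \<sigma> = (\<lambda>y. \<sigma> (fst y) \<bind> (\<lambda>p. return borel (p, y)))"

lemma joint_Kj: "joint P \<sigma> = P \<bind> Kj \<sigma>"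
  unfolding joint_def Kj_def by (intro arg_cong[where f="bind P"]) (auto simp: fun_eq_iff)

lemma fst_borel[measurable]: "fst \<in> (borel :: ('a::second_countable_topology \<times> 'b::second_countable_topology) measure) \<rightarrow>\<^sub>M borel"
  using measurable_fst[of "borel :: 'a measure" "borel :: 'b measure"] by (simp add: borel_prod)

lemma snd_borel[measurable]: "snd \<in> (borel :: ('a::second_countable_topology \<times> 'b::second_countable_topology) measure) \<rightarrow>\<^sub>M borel"
  using measurable_snd[of "borel :: 'a measure" "borel :: 'b measure"] by (simp add: borel_prod)

lemma swap_meas:
  "(\<lambda>(x, y). (y, x)) \<in> (borel :: ('a::second_countable_topology) measure) \<Otimes>\<^sub>M (borel :: ('b::second_countable_topology) measure) \<rightarrow>\<^sub>M (borel :: ('b \<times> 'a) measure)"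
proof -
  have "(\<lambda>(x, y). (y, x)) \<in> (borel :: 'a measure) \<Otimes>\<^sub>M (borel :: 'b measure) \<rightarrow>\<^sub>M (borel \<Otimes>\<^sub>M borel)"
    by measurable
  then show ?thesis by (simp add: borel_prod)
qed

lemma Kj_meas:
  fixes \<sigma> :: "'ts::second_countable_topology \<Rightarrow> real measure"
  assumes s: "\<sigma> \<in> borel \<rightarrow>\<^sub>M prob_algebra borel"
  shows "Kj \<sigma> \<in> (borel :: ('ts \<times> 'tb::second_countable_topology \<times> real) measure) \<rightarrow>\<^sub>M prob_algebra borel"
  unfolding Kj_def
proof (rule measurable_bind_prob_space2)
  show "(\<lambda>x. \<sigma> (fst x)) \<in> (borel :: ('ts \<times> 'tb \<times> real) measure) \<rightarrow>\<^sub>M prob_algebra borel"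
    using s by measurable
  have "return (borel :: (real \<times> 'ts \<times> 'tb \<times> real) measure) \<circ> (\<lambda>(x, y). (y, x)) \<in> (borel :: ('ts \<times> 'tb \<times> real) measure) \<Otimes>\<^sub>M (borel :: real measure) \<rightarrow>\<^sub>M prob_algebra borel"
    by (rule measurable_comp[OF swap_meas measurable_return_prob_space])
  then show "(\<lambda>(x, y). return (borel :: (real \<times> 'ts \<times> 'tb \<times> real) measure) (y, x)) \<in> borel \<Otimes>\<^sub>M borel \<rightarrow>\<^sub>M prob_algebra borel"
    by (simp add: comp_def case_prod_beta')
qed

definition Kb :: "('ts \<Rightarrow> real measure) \<Rightarrow> (real \<times> 'tb \<Rightarrow> real measure) \<Rightarrow> ('ts::topological_space \<times> 'tb::topological_space \<times> real) \<Rightarrow> (real \<times> 'ts \<times> 'tb \<times> real) measure" where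
  "Kb \<sigma> \<nu> = (\<lambda>y. \<sigma> (fst y) \<bind> (\<lambda>p. \<nu> (p, fst (snd y)) \<bind> (\<lambda>w. return borel (p, fst y, fst (snd y), w))))"

lemma belief_Kb: "belief_joint P \<sigma> \<nu> = P \<bind> Kb \<sigma> \<nu>"
  unfolding belief_joint_def Kb_def by (intro arg_cong[where f="bind P"]) (auto simp: fun_eq_iff)

lemma Kb_meas:
  fixes \<sigma> :: "'ts::second_countable_topology \<Rightarrow> real measure"
    and \<nu> :: "real \<times> 'tb::second_countable_topology \<Rightarrow> real measure"
  assumes s: "\<sigma> \<in> borel \<rightarrow>\<^sub>M prob_algebra borel"
    and n: "\<nu> \<in> borel \<rightarrow>\<^sub>M prob_algebra borel"
  shows "Kb \<sigma> \<nu> \<in> (borel :: ('ts \<times> 'tb \<times> real) measure) \<rightarrow>\<^sub>M prob_algebra borel"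
  unfolding Kb_def
proof (rule measurable_bind_prob_space2)
  show "(\<lambda>x. \<sigma> (fst x)) \<in> (borel :: ('ts \<times> 'tb \<times> real) measure) \<rightarrow>\<^sub>M prob_algebra borel"
    using s by measurable
  have m1: "(\<lambda>(y::'ts \<times> 'tb \<times> real, p::real). (p, fst (snd y))) \<in> borel \<Otimes>\<^sub>M borel \<rightarrow>\<^sub>M (borel :: (real \<times> 'tb) measure)"
  proof -
    have "(\<lambda>(y::'ts \<times> 'tb \<times> real, p::real). (p, fst (snd y))) \<in> borel \<Otimes>\<^sub>M borel \<rightarrow>\<^sub>M (borel \<Otimes>\<^sub>M borel :: (real \<times> 'tb) measure)"
      by measurable
    then show ?thesis by (simp add: borel_prod)
  qed
  have m2: "(\<lambda>x::(('ts \<times> 'tb \<times> real) \<times> real) \<times> real. (snd (fst x), fst (fst (fst x)), fst (snd (fst (fst x))), snd x)) \<in> (borel \<Otimes>\<^sub>M borel) \<Otimes>\<^sub>M borel \<rightarrow>\<^sub>M (borel :: (real \<times> 'ts \<times> 'tb \<times> real) measure)"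
  proof -
    have "(\<lambda>x::(('ts \<times> 'tb \<times> real) \<times> real) \<times> real. (snd (fst x), fst (fst (fst x)), fst (snd (fst (fst x))), snd x)) \<in> (borel \<Otimes>\<^sub>M borel) \<Otimes>\<^sub>M borel \<rightarrow>\<^sub>M (borel \<Otimes>\<^sub>M (borel \<Otimes>\<^sub>M (borel \<Otimes>\<^sub>M borel)) :: (real \<times> 'ts \<times> 'tb \<times> real) measure)"
      by measurable
    then show ?thesis by (simp add: borel_prod)
  qed
  have "(\<lambda>x. \<nu> (snd x, fst (snd (fst x))) \<bind> (\<lambda>w. return (borel :: (real \<times> 'ts \<times> 'tb \<times> real) measure) (snd x, fst (fst x), fst (snd (fst x)), w))) \<in> (borel :: ('ts \<times> 'tb \<times> real) measure) \<Otimes>\<^sub>M (borel :: real measure) \<rightarrow>\<^sub>M prob_algebra borel"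
  proof (rule measurable_bind_prob_space2[where N=borel])
    show "(\<lambda>x. \<nu> (snd x, fst (snd (fst x)))) \<in> (borel :: ('ts \<times> 'tb \<times> real) measure) \<Otimes>\<^sub>M (borel :: real measure) \<rightarrow>\<^sub>M prob_algebra borel"
      using measurable_comp[OF m1 n] by (simp add: comp_def split_beta')
    show "(\<lambda>(x, w). return (borel :: (real \<times> 'ts \<times> 'tb \<times> real) measure) (snd x, fst (fst x), fst (snd (fst x)), w))
      \<in> ((borel :: ('ts \<times> 'tb \<times> real) measure) \<Otimes>\<^sub>M (borel :: real measure)) \<Otimes>\<^sub>M borel \<rightarrow>\<^sub>M prob_algebra borel"
      using measurable_comp[OF m2 measurable_return_prob_space] by (simp add: comp_def split_beta')
  qed
  then show "(\<lambda>(y :: 'ts \<times> 'tb \<times> real, p). \<nu> (p, fst (snd y)) \<bind> (\<lambda>w. return (borel :: (real \<times> 'ts \<times> 'tb \<times> real) measure) (p, fst y, fst (snd y), w))) \<in> borel \<Otimes>\<^sub>M borel \<rightarrow>\<^sub>M prob_algebra borel"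
    by (simp add: split_beta')
qed


lemma Kj_measP:
  fixes \<sigma> :: "'ts::second_countable_topology \<Rightarrow> real measure"
    and P :: "('ts \<times> 'tb::second_countable_topology \<times> real) measure"
  assumes s: "\<sigma> \<in> borel \<rightarrow>\<^sub>M prob_algebra borel" and sP: "sets P = sets borel"
  shows "Kj \<sigma> \<in> P \<rightarrow>\<^sub>M subprob_algebra borel"
  using measurable_prob_algebraD[OF Kj_meas[OF s]] measurable_cong_sets[OF sP refl] by blast

lemma Kb_measP:
  fixes \<sigma> :: "'ts::second_countable_topology \<Rightarrow> real measure"
    and \<nu> :: "real \<times> 'tb::second_countable_topology \<Rightarrow> real measure"
    and P :: "('ts \<times> 'tb \<times> real) measure"
  assumes s: "\<sigma> \<in> borel \<rightarrow>\<^sub>M prob_algebra borel" and n: "\<nu> \<in> borel \<rightarrow>\<^sub>M prob_algebra borel"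
    and sP: "sets P = sets borel"
  shows "Kb \<sigma> \<nu> \<in> P \<rightarrow>\<^sub>M subprob_algebra borel"
  using measurable_prob_algebraD[OF Kb_meas[OF s n]] measurable_cong_sets[OF sP refl] by blast

lemma joint_prob:
  fixes \<sigma> :: "'ts::second_countable_topology \<Rightarrow> real measure"
    and P :: "('ts \<times> 'tb::second_countable_topology \<times> real) measure"
  assumes s: "\<sigma> \<in> borel \<rightarrow>\<^sub>M prob_algebra borel" and sP: "sets P = sets borel" and pP: "prob_space P"
  shows "prob_space (joint P \<sigma>)" "sets (joint P \<sigma>) = sets borel"
proof -
  have P: "P \<in> space (prob_algebra borel)" using sP pP by (simp add: space_prob_algebra)
  show "prob_space (joint P \<sigma>)" unfolding joint_Kj by (rule prob_space_bind'[OF P Kj_meas[OF s]])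
  show "sets (joint P \<sigma>) = sets borel" unfolding joint_Kj by (rule sets_bind'[OF P Kj_meas[OF s]])
qed

lemma belief_prob:
  fixes \<sigma> :: "'ts::second_countable_topology \<Rightarrow> real measure"
    and \<nu> :: "real \<times> 'tb::second_countable_topology \<Rightarrow> real measure"
    and P :: "('ts \<times> 'tb \<times> real) measure"
  assumes s: "\<sigma> \<in> borel \<rightarrow>\<^sub>M prob_algebra borel" and n: "\<nu> \<in> borel \<rightarrow>\<^sub>M prob_algebra borel"
    and sP: "sets P = sets borel" and pP: "prob_space P"
  shows "prob_space (belief_joint P \<sigma> \<nu>)" "sets (belief_joint P \<sigma> \<nu>) = sets borel"
proof -
  have P: "P \<in> space (prob_algebra borel)" using sP pP by (simp add: space_prob_algebra)
  show "prob_space (belief_joint P \<sigma> \<nu>)" unfolding belief_Kb by (rule prob_space_bind'[OF P Kb_meas[OF s n]])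
  show "sets (belief_joint P \<sigma> \<nu>) = sets borel" unfolding belief_Kb by (rule sets_bind'[OF P Kb_meas[OF s n]])
qed

lemma pair_left_meas: "(\<lambda>p. (p, y)) \<in> (borel :: 'a::second_countable_topology measure) \<rightarrow>\<^sub>M (borel :: ('a \<times> 'b::second_countable_topology) measure)"
proof -
  have "(\<lambda>p. (p, y)) \<in> (borel :: 'a measure) \<rightarrow>\<^sub>M (borel \<Otimes>\<^sub>M borel :: ('a \<times> 'b) measure)" by measurable
  then show ?thesis by (simp add: borel_prod)
qed

lemma pair_right_meas: "(\<lambda>p. (y, p)) \<in> (borel :: 'a::second_countable_topology measure) \<rightarrow>\<^sub>M (borel :: ('b::second_countable_topology \<times> 'a) measure)"
proof -
  have "(\<lambda>p. (y, p)) \<in> (borel :: 'a measure) \<rightarrow>\<^sub>M (borel \<Otimes>\<^sub>M borel :: ('b \<times> 'a) measure)" by measurable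
  then show ?thesis by (simp add: borel_prod)
qed

lemma bounded_bind_integral:
  fixes h :: "'b \<Rightarrow> real"
  assumes h: "h \<in> borel_measurable K" and hb: "\<And>x. \<bar>h x\<bar> \<le> B"
    and N: "N \<in> M \<rightarrow>\<^sub>M subprob_algebra K" and M: "finite_measure M"
  shows "integral\<^sup>L (M \<bind> N) h = (\<integral>x. integral\<^sup>L (N x) h \<partial>M)"
proof (rule integral_bind[OF h _ N M, where B=B and B'=1])
  show "AE x in M. emeasure (N x) (space (N x)) \<le> ennreal 1"
    using subprob_space_kernel[OF N] by (auto intro!: AE_I2 subprob_space.subprob_emeasure_le_1)
qed (use hb in auto)

lemma joint_integral:
  fixes \<sigma> :: "'ts::second_countable_topology \<Rightarrow> real measure"
    and P :: "('ts \<times> 'tb::second_countable_topology \<times> real) measure"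
    and h :: "real \<times> 'ts \<times> 'tb \<times> real \<Rightarrow> real"
  assumes s: "\<sigma> \<in> borel \<rightarrow>\<^sub>M prob_algebra borel" and sP: "sets P = sets borel" and pP: "prob_space P"
    and h: "h \<in> borel_measurable borel" and hb: "\<And>x. \<bar>h x\<bar> \<le> B"
  shows "integral\<^sup>L (joint P \<sigma>) h = (\<integral>y. (\<integral>p. h (p, y) \<partial>\<sigma> (fst y)) \<partial>P)"
proof -
  have 1: "integral\<^sup>L (joint P \<sigma>) h = (\<integral>y. integral\<^sup>L (Kj \<sigma> y) h \<partial>P)"
    unfolding joint_Kj
    by (rule bounded_bind_integral[OF h hb Kj_measP[OF s sP]]) (use pP prob_space_def in auto)
  have 2: "integral\<^sup>L (Kj \<sigma> y) h = (\<integral>p. h (p, y) \<partial>\<sigma> (fst y))" for y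
  proof -
    have sy: "\<sigma> (fst y) \<in> space (prob_algebra borel)"
      using measurable_space[OF s] by simp
    then have sy': "prob_space (\<sigma> (fst y))" "sets (\<sigma> (fst y)) = sets borel"
      by (auto simp: space_prob_algebra)
    have R: "(\<lambda>p. return (borel :: (real \<times> 'ts \<times> 'tb \<times> real) measure) (p, y)) \<in> \<sigma> (fst y) \<rightarrow>\<^sub>M subprob_algebra borel"
    proof -
      have "(\<lambda>p. return (borel :: (real \<times> 'ts \<times> 'tb \<times> real) measure) (p, y)) \<in> borel \<rightarrow>\<^sub>M subprob_algebra borel"
        using measurable_comp[OF pair_left_meas[of y] return_measurable] by (simp add: comp_def)
      then show ?thesis using measurable_cong_sets[OF sy'(2) refl] by blast
    qed
    have "integral\<^sup>L (Kj \<sigma> y) h = (\<integral>p. integral\<^sup>L (return borel (p, y)) h \<partial>\<sigma> (fst y))"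
      unfolding Kj_def
      by (rule bounded_bind_integral[OF h hb R]) (use sy' prob_space_def in auto)
    also have "\<dots> = (\<integral>p. h (p, y) \<partial>\<sigma> (fst y))"
      by (intro Bochner_Integration.integral_cong refl integral_return h) simp
    finally show ?thesis .
  qed
  show ?thesis unfolding 1 2 ..
qed

lemma belief_integral:
  fixes \<sigma> :: "'ts::second_countable_topology \<Rightarrow> real measure"
    and \<nu> :: "real \<times> 'tb::second_countable_topology \<Rightarrow> real measure"
    and P :: "('ts \<times> 'tb \<times> real) measure"
    and h :: "real \<times> 'ts \<times> 'tb \<times> real \<Rightarrow> real"
  assumes s: "\<sigma> \<in> borel \<rightarrow>\<^sub>M prob_algebra borel" and n: "\<nu> \<in> borel \<rightarrow>\<^sub>M prob_algebra borel"
    and sP: "sets P = sets borel" and pP: "prob_space P"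
    and h: "h \<in> borel_measurable borel" and hb: "\<And>x. \<bar>h x\<bar> \<le> B"
  shows "integral\<^sup>L (belief_joint P \<sigma> \<nu>) h =
    (\<integral>y. (\<integral>p. (\<integral>w. h (p, fst y, fst (snd y), w) \<partial>\<nu> (p, fst (snd y))) \<partial>\<sigma> (fst y)) \<partial>P)"
proof -
  have 1: "integral\<^sup>L (belief_joint P \<sigma> \<nu>) h = (\<integral>y. integral\<^sup>L (Kb \<sigma> \<nu> y) h \<partial>P)"
    unfolding belief_Kb
    by (rule bounded_bind_integral[OF h hb Kb_measP[OF s n sP]]) (use pP prob_space_def in auto)
  have 2: "integral\<^sup>L (Kb \<sigma> \<nu> y) h = (\<integral>p. (\<integral>w. h (p, fst y, fst (snd y), w) \<partial>\<nu> (p, fst (snd y))) \<partial>\<sigma> (fst y))" for y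
  proof -
    have sy: "\<sigma> (fst y) \<in> space (prob_algebra borel)"
      using measurable_space[OF s] by simp
    then have sy': "prob_space (\<sigma> (fst y))" "sets (\<sigma> (fst y)) = sets borel"
      by (auto simp: space_prob_algebra)
    have ny: "\<nu> x \<in> space (prob_algebra borel)" for x
      using measurable_space[OF n] by simp
    then have ny': "prob_space (\<nu> x)" "sets (\<nu> x) = sets borel" for x
      by (auto simp: space_prob_algebra)
    have R: "(\<lambda>w. return (borel :: (real \<times> 'ts \<times> 'tb \<times> real) measure) (p, fst y, fst (snd y), w)) \<in> \<nu> x \<rightarrow>\<^sub>M subprob_algebra borel" for p x
    proof -
      have "(\<lambda>w. return (borel :: (real \<times> 'ts \<times> 'tb \<times> real) measure) (p, fst y, fst (snd y), w)) \<in> borel \<rightarrow>\<^sub>M subprob_algebra borel"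
        using measurable_comp[OF pair_right_meas[of "(p, fst y, fst (snd y))"] return_measurable] by (simp add: comp_def)
      then show ?thesis using measurable_cong_sets[OF ny'(2) refl] by blast
    qed
    have m1: "(\<lambda>p. (p, fst (snd y))) \<in> (borel :: real measure) \<rightarrow>\<^sub>M (borel :: (real \<times> 'tb) measure)"
      by (rule pair_left_meas)
    have m2: "(\<lambda>(p, w). (p, fst y, fst (snd y), w)) \<in> (borel :: real measure) \<Otimes>\<^sub>M (borel :: real measure) \<rightarrow>\<^sub>M (borel :: (real \<times> 'ts \<times> 'tb \<times> real) measure)"
    proof -
      have "(\<lambda>(p, w). (p, fst y, fst (snd y), w)) \<in> (borel :: real measure) \<Otimes>\<^sub>M (borel :: real measure) \<rightarrow>\<^sub>M (borel \<Otimes>\<^sub>M (borel \<Otimes>\<^sub>M (borel \<Otimes>\<^sub>M borel)) :: (real \<times> 'ts \<times> 'tb \<times> real) measure)"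
        by measurable
      then show ?thesis by (simp add: borel_prod)
    qed
    have Q: "(\<lambda>p. \<nu> (p, fst (snd y)) \<bind> (\<lambda>w. return (borel :: (real \<times> 'ts \<times> 'tb \<times> real) measure) (p, fst y, fst (snd y), w))) \<in> (borel :: real measure) \<rightarrow>\<^sub>M prob_algebra borel"
    proof (rule measurable_bind_prob_space2[where N=borel])
      show "(\<lambda>p. \<nu> (p, fst (snd y))) \<in> (borel :: real measure) \<rightarrow>\<^sub>M prob_algebra borel"
        using measurable_comp[OF m1 n] by (simp add: comp_def)
      show "(\<lambda>(p, w). return (borel :: (real \<times> 'ts \<times> 'tb \<times> real) measure) (p, fst y, fst (snd y), w)) \<in> (borel :: real measure) \<Otimes>\<^sub>M borel \<rightarrow>\<^sub>M prob_algebra borel"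
        using measurable_comp[OF m2 measurable_return_prob_space] by (simp add: comp_def split_beta')
    qed
    have Q': "(\<lambda>p. \<nu> (p, fst (snd y)) \<bind> (\<lambda>w. return (borel :: (real \<times> 'ts \<times> 'tb \<times> real) measure) (p, fst y, fst (snd y), w))) \<in> \<sigma> (fst y) \<rightarrow>\<^sub>M subprob_algebra borel"
      using measurable_prob_algebraD[OF Q] measurable_cong_sets[OF sy'(2) refl] by blast
    have "integral\<^sup>L (Kb \<sigma> \<nu> y) h = (\<integral>p. integral\<^sup>L (\<nu> (p, fst (snd y)) \<bind> (\<lambda>w. return borel (p, fst y, fst (snd y), w))) h \<partial>\<sigma> (fst y))"
      unfolding Kb_def
      by (rule bounded_bind_integral[OF h hb Q']) (use sy' prob_space_def in auto)
    also have "\<dots> = (\<integral>p. (\<integral>w. integral\<^sup>L (return borel (p, fst y, fst (snd y), w)) h \<partial>\<nu> (p, fst (snd y))) \<partial>\<sigma> (fst y))"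
      by (intro Bochner_Integration.integral_cong refl bounded_bind_integral[OF h hb R]) (use ny' in \<open>auto simp: prob_space_def\<close>)
    also have "\<dots> = (\<integral>p. (\<integral>w. h (p, fst y, fst (snd y), w) \<partial>\<nu> (p, fst (snd y))) \<partial>\<sigma> (fst y))"
      by (intro Bochner_Integration.integral_cong refl integral_return h) simp
    finally show ?thesis .
  qed
  show ?thesis unfolding 1 2 ..
qed



lemma distr_joint_fst:
  fixes \<sigma> :: "'ts::second_countable_topology \<Rightarrow> real measure"
    and P :: "('ts \<times> 'tb::second_countable_topology \<times> real) measure"
  assumes s: "\<sigma> \<in> borel \<rightarrow>\<^sub>M prob_algebra borel" and sP: "sets P = sets borel" and pP: "prob_space P"
  shows "distr (joint P \<sigma>) borel fst = P \<bind> (\<lambda>y. \<sigma> (fst y))"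
proof -
  have ne: "space P \<noteq> {}" using pP prob_space.not_empty by blast
  have fm: "fst \<in> (borel :: (real \<times> 'ts \<times> 'tb \<times> real) measure) \<rightarrow>\<^sub>M (borel :: real measure)" by measurable
  have 1: "distr (joint P \<sigma>) borel fst = P \<bind> (\<lambda>y. distr (Kj \<sigma> y) borel fst)"
    unfolding joint_Kj by (rule distr_bind[OF Kj_measP[OF s sP] ne fm])
  have 2: "distr (Kj \<sigma> y) borel fst = \<sigma> (fst y)" for y :: "'ts \<times> 'tb \<times> real"
  proof -
    have sy: "\<sigma> (fst y) \<in> space (prob_algebra borel)"
      using measurable_space[OF s] by simp
    then have sy': "prob_space (\<sigma> (fst y))" "sets (\<sigma> (fst y)) = sets borel"
      by (auto simp: space_prob_algebra)
    have R: "(\<lambda>p. return (borel :: (real \<times> 'ts \<times> 'tb \<times> real) measure) (p, y)) \<in> \<sigma> (fst y) \<rightarrow>\<^sub>M subprob_algebra borel"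
    proof -
      have "(\<lambda>p. return (borel :: (real \<times> 'ts \<times> 'tb \<times> real) measure) (p, y)) \<in> borel \<rightarrow>\<^sub>M subprob_algebra borel"
        using measurable_comp[OF pair_left_meas[of y] return_measurable] by (simp add: comp_def)
      then show ?thesis using measurable_cong_sets[OF sy'(2) refl] by blast
    qed
    have "distr (Kj \<sigma> y) borel fst = \<sigma> (fst y) \<bind> (\<lambda>p. distr (return borel (p, y)) borel fst)"
      unfolding Kj_def by (rule distr_bind[OF R _ fm]) (use sy' prob_space.not_empty in blast)
    also have "\<dots> = \<sigma> (fst y) \<bind> return borel"
      by (intro bind_cong refl) (simp add: distr_return[OF fm])
    also have "\<dots> = \<sigma> (fst y)" by (rule bind_return''[OF sy'(2)])
    finally show ?thesis .
  qed
  show ?thesis unfolding 1 2 ..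
qed


lemma inner_meas:
  fixes \<nu> :: "real \<times> 'tb::second_countable_topology \<Rightarrow> real measure"
    and y :: "'ts::second_countable_topology \<times> 'tb \<times> real"
  assumes n: "\<nu> \<in> borel \<rightarrow>\<^sub>M prob_algebra borel"
  shows "(\<lambda>p. \<nu> (p, fst (snd y)) \<bind> (\<lambda>w. return (borel :: (real \<times> 'ts \<times> 'tb \<times> real) measure) (p, fst y, fst (snd y), w))) \<in> (borel :: real measure) \<rightarrow>\<^sub>M prob_algebra borel"
proof -
    have m1: "(\<lambda>p. (p, fst (snd y))) \<in> (borel :: real measure) \<rightarrow>\<^sub>M (borel :: (real \<times> 'tb) measure)"
      by (rule pair_left_meas)
    have m2: "(\<lambda>(p, w). (p, fst y, fst (snd y), w)) \<in> (borel :: real measure) \<Otimes>\<^sub>M (borel :: real measure) \<rightarrow>\<^sub>M (borel :: (real \<times> 'ts \<times> 'tb \<times> real) measure)"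
    proof -
      have "(\<lambda>(p, w). (p, fst y, fst (snd y), w)) \<in> (borel :: real measure) \<Otimes>\<^sub>M (borel :: real measure) \<rightarrow>\<^sub>M (borel \<Otimes>\<^sub>M (borel \<Otimes>\<^sub>M (borel \<Otimes>\<^sub>M borel)) :: (real \<times> 'ts \<times> 'tb \<times> real) measure)"
        by measurable
      then show ?thesis by (simp add: borel_prod)
    qed
    show ?thesis
    proof (rule measurable_bind_prob_space2[where N=borel])
      show "(\<lambda>p. \<nu> (p, fst (snd y))) \<in> (borel :: real measure) \<rightarrow>\<^sub>M prob_algebra borel"
        using measurable_comp[OF m1 n] by (simp add: comp_def)
      show "(\<lambda>(p, w). return (borel :: (real \<times> 'ts \<times> 'tb \<times> real) measure) (p, fst y, fst (snd y), w)) \<in> (borel :: real measure) \<Otimes>\<^sub>M borel \<rightarrow>\<^sub>M prob_algebra borel"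
        using measurable_comp[OF m2 measurable_return_prob_space] by (simp add: comp_def split_beta')
    qed
qed

locale env =
  fixes V :: "real set" and \<mu> :: "real measure" and c :: "real \<Rightarrow> real"
  assumes mu_prob: "prob_space \<mu>" and mu_sets: "sets \<mu> = sets borel"
    and V_compact: "compact V" and V_ne: "V \<noteq> {}"
    and supp: "support_of \<mu> = V"
    and c_cont: "continuous_on V c"
    and vc_nonneg: "\<forall>v\<in>V. v - c v \<ge> 0"
    and S_pos: "surplus \<mu> V c > 0"
begin

lemma mu_space[simp]: "space \<mu> = UNIV"
  using sets_eq_imp_space_eq[OF mu_sets] by simp

lemma V_closed: "closed V" using V_compact compact_imp_closed by blast

lemma V_borel[measurable]: "V \<in> sets borel" using V_closed by simp

lemma AE_V: "AE v in \<mu>. v \<in> V"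
proof -
  define F where "F = {U. open U \<and> emeasure \<mu> U = 0}"
  obtain F' where F': "F' \<subseteq> F" "countable F'" "\<Union>F' = \<Union>F"
    using Lindelof[of F] unfolding F_def by blast
  have null: "\<Union>F' \<in> null_sets \<mu>"
  proof -
    have "(\<Union>U\<in>F'. U) \<in> null_sets \<mu>"
      by (rule null_sets_UN'[OF F'(2)]) (use F' in \<open>auto simp: F_def mu_sets null_sets_def\<close>)
    then show ?thesis by simp
  qed
  have "{x \<in> space \<mu>. x \<notin> V} \<subseteq> \<Union>F'"
  proof
    fix x assume x: "x \<in> {x \<in> space \<mu>. x \<notin> V}"
    then have "x \<notin> support_of \<mu>" using supp by simp
    then obtain U where U: "open U" "x \<in> U" "\<not> emeasure \<mu> U > 0"
      unfolding support_of_def by auto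
    then have "U \<in> F" unfolding F_def by (auto simp: not_less)
    then show "x \<in> \<Union>F'" using U F'(3) by blast
  qed
  then show ?thesis by (rule AE_I'[OF null])
qed

lemma infV: "Inf V \<in> V" using V_compact V_ne
  by (meson bounded_imp_bdd_below closed_contains_Inf compact_imp_bounded compact_imp_closed)
lemma supV: "Sup V \<in> V" using V_compact V_ne
  by (meson bounded_imp_bdd_above closed_contains_Sup compact_imp_bounded compact_imp_closed)
lemma infV_le: "v \<in> V \<Longrightarrow> Inf V \<le> v" using V_compact
  by (meson bounded_imp_bdd_below cInf_lower compact_imp_bounded)
lemma supV_ge: "v \<in> V \<Longrightarrow> v \<le> Sup V" using V_compact
  by (meson bounded_imp_bdd_above cSup_upper compact_imp_bounded)

lemma costV_meas[measurable]: "costV V c \<in> borel_measurable borel"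
proof -
  have "(\<lambda>x. indicator V x *\<^sub>R c x) \<in> borel_measurable borel"
    by (rule borel_measurable_continuous_on_indicator[OF V_borel c_cont])
  moreover have "(\<lambda>x. indicator V x *\<^sub>R c x) = costV V c"
    by (auto simp: fun_eq_iff costV_def indicator_def)
  ultimately show ?thesis by simp
qed

definition Bc where "Bc = (SOME B. \<forall>v\<in>V. \<bar>c v\<bar> \<le> B)"

lemma Bc: "v \<in> V \<Longrightarrow> \<bar>c v\<bar> \<le> Bc"
proof -
  have "compact (c ` V)" by (rule compact_continuous_image[OF c_cont V_compact])
  then have "bounded (c ` V)" by (rule compact_imp_bounded)
  then obtain B where "\<forall>x\<in>c ` V. norm x \<le> B" unfolding bounded_iff by blast
  then have "\<exists>B. \<forall>v\<in>V. \<bar>c v\<bar> \<le> B" by auto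
  then have "\<forall>v\<in>V. \<bar>c v\<bar> \<le> Bc" unfolding Bc_def by (rule someI_ex)
  then show "v \<in> V \<Longrightarrow> \<bar>c v\<bar> \<le> Bc" by blast
qed

lemma Bc_nonneg: "0 \<le> Bc" using Bc[OF infV] by linarith

lemma costV_bound: "\<bar>costV V c v\<bar> \<le> Bc"
  using Bc Bc_nonneg by (auto simp: costV_def)

definition Bv where "Bv = \<bar>Inf V\<bar> + \<bar>Sup V\<bar>"

lemma Bv: "v \<in> V \<Longrightarrow> \<bar>v\<bar> \<le> Bv"
  using infV_le supV_ge unfolding Bv_def by fastforce

definition clampV where "clampV v = (if v \<in> V then v else Inf V)"

lemma clampV_meas[measurable]: "clampV \<in> borel_measurable borel"
  unfolding clampV_def by measurable

lemma clampV_bound: "\<bar>clampV v\<bar> \<le> Bv"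
  using Bv infV unfolding clampV_def by auto

definition gV where "gV v = (if v \<in> V then v - c v else 0)"

lemma gV_meas[measurable]: "gV \<in> borel_measurable borel"
proof -
  have "gV = (\<lambda>v. clampV v - costV V c v - (if v \<in> V then 0 else Inf V))"
    by (auto simp: fun_eq_iff gV_def clampV_def costV_def)
  then show ?thesis by simp
qed

lemma gV_bound: "\<bar>gV v\<bar> \<le> Bv + Bc"
proof (cases "v \<in> V")
  case True
  then show ?thesis using Bv[OF True] Bc[OF True] unfolding gV_def by (simp add: abs_le_iff)
next
  case False
  then show ?thesis using Bc_nonneg Bv[OF infV] unfolding gV_def by simp
qed

lemma int_mu_id: "integrable \<mu> (\<lambda>v. v)"
proof -
  interpret prob_space \<mu> by (rule mu_prob)
  show ?thesis
    by (rule integrable_const_bound[where B=Bv]) (use AE_V Bv in \<open>auto simp: mu_sets measurable_cong_sets[OF mu_sets refl]\<close>)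
qed

lemma int_mu_cost: "integrable \<mu> (costV V c)"
proof -
  interpret prob_space \<mu> by (rule mu_prob)
  show ?thesis
    by (rule integrable_const_bound[where B=Bc]) (use costV_bound in \<open>auto simp: measurable_cong_sets[OF mu_sets refl]\<close>)
qed

definition Ev where "Ev = (\<integral>v. v \<partial>\<mu>)"
definition Ec where "Ec = (\<integral>v. costV V c v \<partial>\<mu>)"
definition S where "S = surplus \<mu> V c"
definition fl where "fl = seller_floor \<mu> V c"

lemma S_eq: "S = Ev - Ec"
  unfolding S_def surplus_def Ev_def Ec_def by (rule Bochner_Integration.integral_diff[OF int_mu_id int_mu_cost])

lemma fl_eq: "fl = max (Inf V - Ec) 0" unfolding fl_def seller_floor_def Ec_def ..

lemma Ev_ge: "Inf V \<le> Ev"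
proof -
  interpret prob_space \<mu> by (rule mu_prob)
  have "(\<integral>v. Inf V \<partial>\<mu>) \<le> Ev"
    unfolding Ev_def by (rule integral_mono_AE[OF _ int_mu_id]) (use AE_V infV_le in auto)
  then show ?thesis using prob_space by simp
qed

lemma S_gt: "0 < S" using S_pos S_def by simp

lemma fl_le_S: "fl \<le> S" using fl_eq S_eq Ev_ge S_gt by linarith

lemma S_int: "S = (\<integral>v. gV v \<partial>\<mu>)"
  unfolding S_def surplus_def
proof (rule integral_cong_AE)
  have "(\<lambda>v. v - costV V c v) \<in> borel_measurable borel" by simp
  then show "(\<lambda>v. v - costV V c v) \<in> borel_measurable \<mu>" using measurable_cong_sets[OF mu_sets refl] by blast
  show "gV \<in> borel_measurable \<mu>" using gV_meas measurable_cong_sets[OF mu_sets refl] by blast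
qed (use AE_V in \<open>auto simp: gV_def costV_def\<close>)


lemma nu_facts:
  assumes n: "\<nu> \<in> borel \<rightarrow>\<^sub>M prob_algebra borel" and nV: "measure (\<nu> x) V = 1"
  shows "AE w in \<nu> x. w \<in> V" "(\<integral>w. w \<partial>\<nu> x) = (\<integral>w. clampV w \<partial>\<nu> x)"
    "Inf V \<le> (\<integral>w. w \<partial>\<nu> x)" "(\<integral>w. w \<partial>\<nu> x) \<le> Sup V" "prob_space (\<nu> x)" "sets (\<nu> x) = sets borel"
proof -
  have "\<nu> x \<in> space (prob_algebra borel)" using measurable_space[OF n] by simp
  then show ps: "prob_space (\<nu> x)" and ss: "sets (\<nu> x) = sets borel" by (auto simp: space_prob_algebra)
  interpret prob_space "\<nu> x" by (rule ps)
  show ae: "AE w in \<nu> x. w \<in> V" by (rule AE_prob_1[OF nV])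
  have mc: "clampV \<in> borel_measurable (\<nu> x)" using clampV_meas measurable_cong_sets[OF ss refl] by blast
  have mi: "(\<lambda>w. w) \<in> borel_measurable (\<nu> x)" by (rule measurable_ident_sets[OF ss])
  have ic: "integrable (\<nu> x) clampV"
    by (rule integrable_const_bound[where B=Bv]) (use clampV_bound mc in auto)
  show eq: "(\<integral>w. w \<partial>\<nu> x) = (\<integral>w. clampV w \<partial>\<nu> x)"
    by (rule integral_cong_AE[OF mi mc]) (use ae in \<open>auto simp: clampV_def\<close>)
  have "(\<integral>w. Inf V \<partial>\<nu> x) \<le> (\<integral>w. clampV w \<partial>\<nu> x)"
    by (rule integral_mono[OF _ ic]) (use infV_le infV in \<open>auto simp: clampV_def\<close>)
  then show "Inf V \<le> (\<integral>w. w \<partial>\<nu> x)" using eq prob_space by simp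
  have "(\<integral>w. clampV w \<partial>\<nu> x) \<le> (\<integral>w. Sup V \<partial>\<nu> x)"
    by (rule integral_mono[OF ic]) (use supV_ge infV supV in \<open>auto simp: clampV_def\<close>)
  then show "(\<integral>w. w \<partial>\<nu> x) \<le> Sup V" using eq prob_space by simp
qed


lemma alpha_meas4:
  fixes \<alpha> :: "real \<times> 'tb::second_countable_topology \<Rightarrow> real"
  assumes [measurable]: "\<alpha> \<in> borel_measurable borel"
  shows "(\<lambda>x::real \<times> 'ts::second_countable_topology \<times> 'tb \<times> real. \<alpha> (fst x, fst (snd (snd x)))) \<in> borel_measurable borel"
  by measurable

lemma Kj_last:
  fixes \<sigma> :: "'ts::second_countable_topology \<Rightarrow> real measure"
  assumes s: "\<sigma> \<in> borel \<rightarrow>\<^sub>M prob_algebra borel"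
  shows "AE z in Kj \<sigma> (y :: 'ts \<times> 'tb::second_countable_topology \<times> real). snd (snd (snd z)) = snd (snd y)"
proof -
  have sy: "\<sigma> (fst y) \<in> space (prob_algebra borel)"
    using measurable_space[OF s] by simp
  then have sy': "prob_space (\<sigma> (fst y))" "sets (\<sigma> (fst y)) = sets borel"
    by (auto simp: space_prob_algebra)
  have R: "(\<lambda>p. return (borel :: (real \<times> 'ts \<times> 'tb \<times> real) measure) (p, y)) \<in> \<sigma> (fst y) \<rightarrow>\<^sub>M subprob_algebra borel"
  proof -
    have "(\<lambda>p. return (borel :: (real \<times> 'ts \<times> 'tb \<times> real) measure) (p, y)) \<in> borel \<rightarrow>\<^sub>M subprob_algebra borel"
      using measurable_comp[OF pair_left_meas[of y] return_measurable] by (simp add: comp_def)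
    then show ?thesis using measurable_cong_sets[OF sy'(2) refl] by blast
  qed
  have pr: "Measurable.pred (borel :: (real \<times> 'ts \<times> 'tb \<times> real) measure) (\<lambda>z. snd (snd (snd z)) = snd (snd y))"
    by measurable
  show ?thesis unfolding Kj_def
    by (subst AE_bind[OF R pr]) (auto intro!: AE_I2 simp: AE_return pr)
qed


lemma dev_payoff:
  fixes P :: "('ts::polish_space \<times> 'tb::polish_space \<times> real) measure"
    and \<alpha> :: "real \<times> 'tb \<Rightarrow> real"
  assumes pP: "prob_space P" and sP: "sets P = sets borel"
    and am[measurable]: "\<alpha> \<in> borel_measurable borel" and a01: "\<And>x. 0 \<le> \<alpha> x \<and> \<alpha> x \<le> 1"
  shows "seller_strategy (\<lambda>_::'ts. return (borel :: real measure) p0)"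
    "integrable (joint P (\<lambda>_. return borel p0)) (seller_integrand V c \<alpha>)"
    "seller_payoff V c P (\<lambda>_. return borel p0) \<alpha> = (\<integral>y. (p0 - costV V c (snd (snd y))) * \<alpha> (p0, fst (snd y)) \<partial>P)"
proof -
  interpret P: prob_space P by (rule pP)
  have rp: "return (borel :: real measure) p0 \<in> space (prob_algebra borel)"
    by (simp add: space_prob_algebra prob_space_return)
  show ss: "seller_strategy (\<lambda>_::'ts. return (borel :: real measure) p0)"
    unfolding seller_strategy_def using rp by simp
  have pm: "(\<lambda>y. (p0, y)) \<in> P \<rightarrow>\<^sub>M (borel :: (real \<times> 'ts \<times> 'tb \<times> real) measure)"
    using pair_right_meas[of p0] measurable_cong_sets[OF sP refl] by blast
  have eqK: "Kj (\<lambda>_. return borel p0) y = return borel (p0, y)" for y :: "'ts \<times> 'tb \<times> real"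
  proof -
    have "(\<lambda>p. return (borel :: (real \<times> 'ts \<times> 'tb \<times> real) measure) (p, y)) \<in> borel \<rightarrow>\<^sub>M subprob_algebra borel"
      using measurable_comp[OF pair_left_meas[of y] return_measurable] by (simp add: comp_def)
    from bind_return[OF this, of p0] show ?thesis unfolding Kj_def by simp
  qed
  have J: "joint P (\<lambda>_. return borel p0) = distr P borel (\<lambda>y. (p0, y))"
    unfolding joint_Kj eqK by (rule bind_return_distr'[OF P.not_empty pm])
  have fm: "seller_integrand V c \<alpha> \<in> borel_measurable (borel :: (real \<times> 'ts \<times> 'tb \<times> real) measure)"
    unfolding seller_integrand_def split_beta' by measurable
  show "integrable (joint P (\<lambda>_. return borel p0)) (seller_integrand V c \<alpha>)"
    unfolding J
  proof (subst integrable_distr_eq[OF pm fm])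
    show "integrable P (\<lambda>x. seller_integrand V c \<alpha> (p0, x))"
    proof (rule P.integrable_const_bound[where B="\<bar>p0\<bar> + Bc"])
      show "AE x in P. norm (seller_integrand V c \<alpha> (p0, x)) \<le> \<bar>p0\<bar> + Bc"
      proof (rule AE_I2)
        fix x :: "'ts \<times> 'tb \<times> real"
        have "\<bar>(p0 - costV V c (snd (snd x))) * \<alpha> (p0, fst (snd x))\<bar> \<le> \<bar>p0 - costV V c (snd (snd x))\<bar> * 1"
          unfolding abs_mult using a01[of "(p0, fst (snd x))"] by (intro mult_left_mono) auto
        also have "\<dots> \<le> \<bar>p0\<bar> + Bc" using costV_bound[of "snd (snd x)"] by simp
        finally show "norm (seller_integrand V c \<alpha> (p0, x)) \<le> \<bar>p0\<bar> + Bc"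
          by (simp add: seller_integrand_def split_beta')
      qed
      show "(\<lambda>x. seller_integrand V c \<alpha> (p0, x)) \<in> borel_measurable P"
        using measurable_comp[OF pm fm] by (simp add: comp_def)
    qed
  qed
  show "seller_payoff V c P (\<lambda>_. return borel p0) \<alpha> = (\<integral>y. (p0 - costV V c (snd (snd y))) * \<alpha> (p0, fst (snd y)) \<partial>P)"
    unfolding seller_payoff_def J integral_distr[OF pm fm]
    by (simp add: seller_integrand_def split_beta')
qed

lemma upper:
  fixes P :: "('ts::polish_space \<times> 'tb::polish_space \<times> real) measure"
    and \<sigma> :: "'ts \<Rightarrow> real measure" and \<alpha> :: "real \<times> 'tb \<Rightarrow> real" and \<nu> :: "real \<times> 'tb \<Rightarrow> real measure"
  assumes I: "info_structure \<mu> P" and W: "wPBE V c P \<sigma> \<alpha> \<nu>"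
  shows "(buyer_payoff P \<sigma> \<alpha>, seller_payoff V c P \<sigma> \<alpha>) \<in> target_set \<mu> V c"
proof -
  have pP: "prob_space P" and sP: "sets P = sets borel" and dP: "distr P borel (\<lambda>x. snd (snd x)) = \<mu>"
    using I unfolding info_structure_def by auto
  have s: "\<sigma> \<in> borel \<rightarrow>\<^sub>M prob_algebra borel" using W unfolding wPBE_def seller_strategy_def by auto
  have am[measurable]: "\<alpha> \<in> borel_measurable borel" and a01: "\<And>x. 0 \<le> \<alpha> x \<and> \<alpha> x \<le> 1"
    using W unfolding wPBE_def by auto
  have n: "\<nu> \<in> borel \<rightarrow>\<^sub>M prob_algebra borel" and nV: "\<And>x. measure (\<nu> x) V = 1"
    using W unfolding wPBE_def by auto
  have rule1: "\<And>p tb. (\<integral>v. v \<partial>\<nu> (p, tb)) > p \<Longrightarrow> \<alpha> (p, tb) = 1"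
    and rule0: "\<And>p tb. (\<integral>v. v \<partial>\<nu> (p, tb)) < p \<Longrightarrow> \<alpha> (p, tb) = 0"
    using W unfolding wPBE_def by auto
  have int_s: "integrable (joint P \<sigma>) (seller_integrand V c \<alpha>)" using W unfolding wPBE_def by auto
  have best: "\<And>\<sigma>'. seller_strategy \<sigma>' \<Longrightarrow> integrable (joint P \<sigma>') (seller_integrand V c \<alpha>) \<Longrightarrow>
        seller_payoff V c P \<sigma>' \<alpha> \<le> seller_payoff V c P \<sigma> \<alpha>"
    using W unfolding wPBE_def by auto
  have cons: "belief_joint P \<sigma> \<nu> = joint P \<sigma>" using W unfolding wPBE_def by auto
  define J where "J = joint P \<sigma>"
  have pJ: "prob_space J" and sJ: "sets J = sets borel" using joint_prob[OF s sP pP] J_def by auto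
  interpret J: prob_space J by (rule pJ)
  interpret P: prob_space P by (rule pP)
  have measJ: "\<And>f. f \<in> borel_measurable borel \<Longrightarrow> f \<in> borel_measurable J"
    using measurable_cong_sets[OF sJ refl] by blast
  note a4 = alpha_meas4[OF am, where 'ts='ts]
  have aeP: "AE y in P. snd (snd y) \<in> V"
  proof -
    have "AE v in distr P borel (\<lambda>x. snd (snd x)). v \<in> V" unfolding dP by (rule AE_V)
    moreover have "(\<lambda>x. snd (snd x)) \<in> P \<rightarrow>\<^sub>M (borel :: real measure)"
    proof -
      have "(\<lambda>x. snd (snd x)) \<in> (borel :: ('ts \<times> 'tb \<times> real) measure) \<rightarrow>\<^sub>M (borel :: real measure)"
        by measurable
      then show ?thesis using measurable_cong_sets[OF sP refl] by blast
    qed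
    ultimately show ?thesis by (subst (asm) AE_distr_iff) auto
  qed
  have aeJ: "AE x in J. snd (snd (snd x)) \<in> V"
  proof -
    have pr: "Measurable.pred (borel :: (real \<times> 'ts \<times> 'tb \<times> real) measure) (\<lambda>z. snd (snd (snd z)) \<in> V)"
      by measurable
    show ?thesis unfolding J_def joint_Kj
      by (subst AE_bind[OF Kj_measP[OF s sP] pr]) (use aeP in \<open>auto elim!: eventually_mono intro: Kj_last[OF s, THEN eventually_mono]\<close>)
  qed

  define ftot where "ftot = (\<lambda>x::real \<times> 'ts \<times> 'tb \<times> real. \<alpha> (fst x, fst (snd (snd x))) * (snd (snd (snd x)) - costV V c (snd (snd (snd x)))))"
  have ftot_m: "ftot \<in> borel_measurable borel" unfolding ftot_def by measurable
  have int_tot: "integrable J ftot"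
  proof (rule J.integrable_const_bound[where B="Bv + Bc"])
    show "AE x in J. norm (ftot x) \<le> Bv + Bc"
      using aeJ
    proof (rule eventually_mono)
      fix x :: "real \<times> 'ts \<times> 'tb \<times> real" assume xV: "snd (snd (snd x)) \<in> V"
      have "\<bar>ftot x\<bar> \<le> 1 * \<bar>snd (snd (snd x)) - costV V c (snd (snd (snd x)))\<bar>"
        unfolding ftot_def abs_mult using a01[of "(fst x, fst (snd (snd x)))"] by (intro mult_right_mono) auto
      also have "\<dots> \<le> Bv + Bc" using Bv[OF xV] costV_bound[of "snd (snd (snd x))"] by simp
      finally show "norm (ftot x) \<le> Bv + Bc" by simp
    qed
  qed (use ftot_m measJ in auto)
  have fs_m: "seller_integrand V c \<alpha> \<in> borel_measurable (borel :: (real \<times> 'ts \<times> 'tb \<times> real) measure)"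
    unfolding seller_integrand_def split_beta' by measurable
  have fb_eq: "buyer_integrand \<alpha> = (\<lambda>x. ftot x - seller_integrand V c \<alpha> x)"
    by (auto simp: fun_eq_iff buyer_integrand_def seller_integrand_def ftot_def split_beta' algebra_simps)
  have int_s': "integrable J (seller_integrand V c \<alpha>)" using int_s J_def by simp
  have int_b: "integrable J (buyer_integrand \<alpha>)"
    unfolding fb_eq by (rule Bochner_Integration.integrable_diff[OF int_tot int_s'])
  have sum_eq: "buyer_payoff P \<sigma> \<alpha> + seller_payoff V c P \<sigma> \<alpha> = integral\<^sup>L J ftot"
    unfolding buyer_payoff_def seller_payoff_def J_def[symmetric] fb_eq
    by (simp add: Bochner_Integration.integral_diff[OF int_tot int_s'])
  have "integral\<^sup>L J ftot \<le> (\<integral>x. gV (snd (snd (snd x))) \<partial>J)"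
  proof (rule integral_mono_AE[OF int_tot])
    show "integrable J (\<lambda>x. gV (snd (snd (snd x))))"
    proof (rule J.integrable_const_bound[where B="Bv + Bc"])
      have "(\<lambda>x::real \<times> 'ts \<times> 'tb \<times> real. gV (snd (snd (snd x)))) \<in> borel_measurable borel" by measurable
      then show "(\<lambda>x::real \<times> 'ts \<times> 'tb \<times> real. gV (snd (snd (snd x)))) \<in> borel_measurable J" by (rule measJ)
    qed (use gV_bound in auto)
    show "AE x in J. ftot x \<le> gV (snd (snd (snd x)))"
      using aeJ
    proof (rule eventually_mono)
      fix x :: "real \<times> 'ts \<times> 'tb \<times> real" assume xV: "snd (snd (snd x)) \<in> V"
      have nn: "0 \<le> snd (snd (snd x)) - c (snd (snd (snd x)))" using vc_nonneg xV by auto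
      have "ftot x \<le> 1 * (snd (snd (snd x)) - c (snd (snd (snd x))))"
      proof -
        have e: "costV V c (snd (snd (snd x))) = c (snd (snd (snd x)))" using xV by (simp add: costV_def)
        show ?thesis unfolding ftot_def e by (rule mult_right_mono) (use a01 nn in auto)
      qed
      then show "ftot x \<le> gV (snd (snd (snd x)))" using xV by (simp add: gV_def)
    qed
  qed
  also have "\<dots> = (\<integral>y. (\<integral>p. gV (snd (snd y)) \<partial>\<sigma> (fst y)) \<partial>P)"
  proof -
    have hm: "(\<lambda>x::real \<times> 'ts \<times> 'tb \<times> real. gV (snd (snd (snd x)))) \<in> borel_measurable borel" by measurable
    show ?thesis unfolding J_def using joint_integral[OF s sP pP hm, of "Bv + Bc"] gV_bound by simp
  qed
  also have "\<dots> = (\<integral>y. gV (snd (snd y)) \<partial>P)"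
  proof (rule Bochner_Integration.integral_cong[OF refl])
    fix y :: "'ts \<times> 'tb \<times> real"
    have "\<sigma> (fst y) \<in> space (prob_algebra borel)" using measurable_space[OF s] by simp
    then have "prob_space (\<sigma> (fst y))" by (auto simp: space_prob_algebra)
    then show "(\<integral>p. gV (snd (snd y)) \<partial>\<sigma> (fst y)) = gV (snd (snd y))"
      by (simp add: prob_space.prob_space)
  qed
  also have "\<dots> = S"
  proof -
    have m: "(\<lambda>x. snd (snd x)) \<in> P \<rightarrow>\<^sub>M (borel :: real measure)"
    proof -
      have "(\<lambda>x. snd (snd x)) \<in> (borel :: ('ts \<times> 'tb \<times> real) measure) \<rightarrow>\<^sub>M (borel :: real measure)"
        by measurable
      then show ?thesis using measurable_cong_sets[OF sP refl] by blast
    qed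
    have "(\<integral>y. gV (snd (snd y)) \<partial>P) = (\<integral>v. gV v \<partial>distr P borel (\<lambda>x. snd (snd x)))"
      by (rule integral_distr[OF m gV_meas, symmetric])
    then show ?thesis unfolding dP S_int by simp
  qed
  finally have sumle: "buyer_payoff P \<sigma> \<alpha> + seller_payoff V c P \<sigma> \<alpha> \<le> surplus \<mu> V c"
    using sum_eq S_def by simp
  have dev: "p0 - Ec \<le> seller_payoff V c P \<sigma> \<alpha>" if p0: "p0 < Inf V" for p0
  proof -
    note D = dev_payoff[OF pP sP am a01, of p0]
    have "\<alpha> (p0, tb) = 1" for tb
      using nu_facts(3)[OF n nV, of "(p0, tb)"] p0 by (intro rule1) simp
    then have "seller_payoff V c P (\<lambda>_. return borel p0) \<alpha> = (\<integral>y. p0 - costV V c (snd (snd y)) \<partial>P)"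
      using D(3) by simp
    also have "\<dots> = p0 - Ec"
    proof -
      have m: "(\<lambda>x. snd (snd x)) \<in> P \<rightarrow>\<^sub>M (borel :: real measure)"
      proof -
        have "(\<lambda>x. snd (snd x)) \<in> (borel :: ('ts \<times> 'tb \<times> real) measure) \<rightarrow>\<^sub>M (borel :: real measure)"
          by measurable
        then show ?thesis using measurable_cong_sets[OF sP refl] by blast
      qed
      have ic: "integrable P (\<lambda>y. costV V c (snd (snd y)))"
        by (rule P.integrable_const_bound[where B=Bc]) (use costV_bound measurable_comp[OF m costV_meas] in \<open>auto simp: comp_def\<close>)
      have "(\<integral>y. costV V c (snd (snd y)) \<partial>P) = (\<integral>v. costV V c v \<partial>distr P borel (\<lambda>x. snd (snd x)))"
        by (rule integral_distr[OF m costV_meas, symmetric])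
      then have "(\<integral>y. costV V c (snd (snd y)) \<partial>P) = Ec" unfolding dP Ec_def .
      then show ?thesis using Bochner_Integration.integral_diff[OF P.integrable_const ic] P.prob_space by simp
    qed
    finally show ?thesis using best[OF D(1) D(2)] by simp
  qed
  have dev0: "0 \<le> seller_payoff V c P \<sigma> \<alpha>"
  proof -
    define p0 where "p0 = Sup V + 1"
    note D = dev_payoff[OF pP sP am a01, of p0]
    have "\<alpha> (p0, tb) = 0" for tb
      using nu_facts(4)[OF n nV, of "(p0, tb)"] by (intro rule0) (simp add: p0_def)
    then have "seller_payoff V c P (\<lambda>_. return borel p0) \<alpha> = 0"
      using D(3) by simp
    then show ?thesis using best[OF D(1) D(2)] by simp
  qed
  have sfl: "Inf V - Ec \<le> seller_payoff V c P \<sigma> \<alpha>"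
  proof (rule ccontr)
    assume "\<not> ?thesis"
    then have lt: "seller_payoff V c P \<sigma> \<alpha> < Inf V - Ec" by simp
    define p0 where "p0 = (seller_payoff V c P \<sigma> \<alpha> + Ec + Inf V) / 2"
    have "p0 < Inf V" using lt unfolding p0_def by simp
    from dev[OF this] lt show False unfolding p0_def by (simp add: field_simps)
  qed
  have sfl': "seller_floor \<mu> V c \<le> seller_payoff V c P \<sigma> \<alpha>"
    using sfl dev0 fl_eq fl_def by simp
  have buy: "0 \<le> buyer_payoff P \<sigma> \<alpha>"
  proof -
    define m where "m = (\<lambda>a. \<integral>w. clampV w \<partial>\<nu> a)"
    have mm[measurable]: "m \<in> borel_measurable borel"
      using measurable_comp[OF measurable_prob_algebraD[OF n] integral_measurable_subprob_algebra[OF clampV_meas]]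
      by (simp add: m_def comp_def)
    have mE: "m a = (\<integral>w. w \<partial>\<nu> a)" for a using nu_facts(2)[OF n nV] m_def by simp
    have mb: "\<bar>m a\<bar> \<le> Bv" for a
      using nu_facts(3,4)[OF n nV, of a] mE[of a] Bv[OF infV] Bv[OF supV] by (simp add: abs_le_iff)
    define f1 where "f1 = (\<lambda>x::real \<times> 'ts \<times> 'tb \<times> real. \<alpha> (fst x, fst (snd (snd x))) * (clampV (snd (snd (snd x))) - m (fst x, fst (snd (snd x)))))"
    define f2 where "f2 = (\<lambda>x::real \<times> 'ts \<times> 'tb \<times> real. \<alpha> (fst x, fst (snd (snd x))) * (m (fst x, fst (snd (snd x))) - fst x))"
    have f1m: "f1 \<in> borel_measurable borel" unfolding f1_def by measurable
    have f2m: "f2 \<in> borel_measurable borel" unfolding f2_def by measurable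
    have f1b: "\<bar>f1 x\<bar> \<le> 2 * Bv" for x
    proof -
      have "\<bar>f1 x\<bar> \<le> 1 * \<bar>clampV (snd (snd (snd x))) - m (fst x, fst (snd (snd x)))\<bar>"
        unfolding f1_def abs_mult using a01[of "(fst x, fst (snd (snd x)))"] by (intro mult_right_mono) auto
      also have "\<dots> \<le> 2 * Bv" using clampV_bound[of "snd (snd (snd x))"] mb[of "(fst x, fst (snd (snd x)))"] by simp
      finally show ?thesis .
    qed
    have f2nn: "0 \<le> f2 x" for x
    proof (cases "m (fst x, fst (snd (snd x))) < fst x")
      case True
      then have "\<alpha> (fst x, fst (snd (snd x))) = 0" using mE by (intro rule0) simp
      then show ?thesis unfolding f2_def by simp
    next
      case False
      then show ?thesis unfolding f2_def using a01 by simp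
    qed
    have int1: "integrable J f1"
      by (rule J.integrable_const_bound[where B="2 * Bv"]) (use f1b f1m measJ in auto)
    have i1: "integral\<^sup>L J f1 = 0"
    proof -
      have "integral\<^sup>L J f1 = integral\<^sup>L (belief_joint P \<sigma> \<nu>) f1" using cons J_def by simp
      also have "\<dots> = (\<integral>y. (\<integral>p. (\<integral>w. f1 (p, fst y, fst (snd y), w) \<partial>\<nu> (p, fst (snd y))) \<partial>\<sigma> (fst y)) \<partial>P)"
        by (rule belief_integral[OF s n sP pP f1m f1b])
      also have "\<dots> = (\<integral>y. (\<integral>p. 0 \<partial>\<sigma> (fst y)) \<partial>P)"
      proof (intro Bochner_Integration.integral_cong refl)
        fix y :: "'ts \<times> 'tb \<times> real" and p :: real
        define a where "a = (p, fst (snd y))"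
        interpret N: prob_space "\<nu> a" by (rule nu_facts(5)[OF n nV])
        have mc: "clampV \<in> borel_measurable (\<nu> a)"
          using clampV_meas measurable_cong_sets[OF nu_facts(6)[OF n nV] refl] by blast
        have ic: "integrable (\<nu> a) clampV"
          by (rule N.integrable_const_bound[where B=Bv]) (use clampV_bound mc in auto)
        have "(\<integral>w. f1 (p, fst y, fst (snd y), w) \<partial>\<nu> a) = (\<integral>w. \<alpha> a * (clampV w - m a) \<partial>\<nu> a)"
          unfolding f1_def a_def by simp
        also have "\<dots> = \<alpha> a * ((\<integral>w. clampV w \<partial>\<nu> a) - m a)"
          using Bochner_Integration.integral_diff[OF ic N.integrable_const[of "m a"]] N.prob_space by simp
        also have "\<dots> = 0" unfolding m_def by simp
        finally show "(\<integral>w. f1 (p, fst y, fst (snd y), w) \<partial>\<nu> (p, fst (snd y))) = 0" unfolding a_def .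
      qed
      also have "\<dots> = 0" by simp
      finally show ?thesis .
    qed
    have ae12: "AE x in J. buyer_integrand \<alpha> x = f1 x + f2 x"
      using aeJ by (rule eventually_mono) (auto simp: buyer_integrand_def f1_def f2_def clampV_def split_beta' algebra_simps)
    have bm: "buyer_integrand \<alpha> \<in> borel_measurable (borel :: (real \<times> 'ts \<times> 'tb \<times> real) measure)"
      unfolding buyer_integrand_def split_beta' by measurable
    have int2: "integrable J f2"
    proof -
      have "integrable J (\<lambda>x. buyer_integrand \<alpha> x - f1 x)"
        by (rule Bochner_Integration.integrable_diff[OF int_b int1])
      moreover have "AE x in J. buyer_integrand \<alpha> x - f1 x = f2 x"
        using ae12 by (rule eventually_mono) simp
      ultimately show ?thesis
        using integrable_cong_AE[of "\<lambda>x. buyer_integrand \<alpha> x - f1 x" J f2] measJ[OF bm] measJ[OF f1m] measJ[OF f2m]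
        by simp
    qed
    have "buyer_payoff P \<sigma> \<alpha> = integral\<^sup>L J (\<lambda>x. f1 x + f2 x)"
      unfolding buyer_payoff_def J_def[symmetric]
      by (rule integral_cong_AE[OF measJ[OF bm] _ ae12]) (use measJ[OF f1m] measJ[OF f2m] in simp)
    also have "\<dots> = integral\<^sup>L J f2"
      using Bochner_Integration.integral_add[OF int1 int2] i1 by simp
    also have "\<dots> \<ge> 0" by (rule Bochner_Integration.integral_nonneg) (use f2nn in auto)
    finally show ?thesis .
  qed
  show ?thesis unfolding target_set_def using buy sfl' sumle by simp
qed


definition P0 :: "(real \<times> real \<times> real) measure" where
  "P0 = distr \<mu> borel (\<lambda>v. (0::real, 0::real, v))"

lemma P0_meas: "(\<lambda>v. (0::real, 0::real, v)) \<in> \<mu> \<rightarrow>\<^sub>M (borel :: (real \<times> real \<times> real) measure)"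
proof -
  have "(\<lambda>v. (0::real, 0::real, v)) \<in> (borel :: real measure) \<rightarrow>\<^sub>M (borel \<Otimes>\<^sub>M (borel \<Otimes>\<^sub>M borel) :: (real \<times> real \<times> real) measure)"
    by measurable
  then have "(\<lambda>v. (0::real, 0::real, v)) \<in> (borel :: real measure) \<rightarrow>\<^sub>M (borel :: (real \<times> real \<times> real) measure)"
    by (simp add: borel_prod)
  then show ?thesis using measurable_cong_sets[OF mu_sets refl] by blast
qed

lemma P0_info: "info_structure \<mu> P0" "prob_space P0" "sets P0 = sets borel"
proof -
  show pP: "prob_space P0" unfolding P0_def by (rule prob_space.prob_space_distr[OF mu_prob P0_meas])
  show sP: "sets P0 = sets borel" unfolding P0_def by simp
  have m2: "(\<lambda>x::real \<times> real \<times> real. snd (snd x)) \<in> (borel :: (real \<times> real \<times> real) measure) \<rightarrow>\<^sub>M (borel :: real measure)"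
    by measurable
  have "distr P0 borel (\<lambda>x. snd (snd x)) = distr \<mu> borel (\<lambda>v. v)"
    unfolding P0_def by (simp add: distr_distr[OF m2 P0_meas] comp_def)
  also have "\<dots> = \<mu>" by (rule distr_id2[OF mu_sets[symmetric]])
  finally show "info_structure \<mu> P0" unfolding info_structure_def using pP sP by simp
qed

lemma P0_fst:
  assumes s: "\<sigma> \<in> borel \<rightarrow>\<^sub>M prob_algebra borel"
  shows "distr (joint P0 \<sigma>) borel fst = \<sigma> 0"
proof -
  have "distr (joint P0 \<sigma>) borel fst = P0 \<bind> (\<lambda>y. \<sigma> (fst y))"
    by (rule distr_joint_fst[OF s P0_info(3,2)])
  also have "\<dots> = \<mu> \<bind> (\<lambda>v. \<sigma> 0)"
  proof -
    have "(\<lambda>y::real \<times> real \<times> real. \<sigma> (fst y)) \<in> borel \<rightarrow>\<^sub>M subprob_algebra borel"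
      using measurable_prob_algebraD[OF s] by measurable
    then show ?thesis unfolding P0_def
      by (subst bind_distr[OF P0_meas]) (auto simp: prob_space.not_empty[OF mu_prob])
  qed
  also have "\<dots> = \<sigma> 0"
  proof (rule bind_const'[OF mu_prob])
    have "\<sigma> 0 \<in> space (prob_algebra borel)" using measurable_space[OF s] by simp
    then show "subprob_space (\<sigma> 0)" by (auto simp: space_prob_algebra prob_space_imp_subprob_space)
  qed
  finally show ?thesis .
qed


lemma aeJ_gen:
  fixes P :: "('ts::second_countable_topology \<times> 'tb::second_countable_topology \<times> real) measure"
  assumes I: "info_structure \<mu> P" and s: "\<sigma> \<in> borel \<rightarrow>\<^sub>M prob_algebra borel"
  shows "AE x in joint P \<sigma>. snd (snd (snd x)) \<in> V"
proof -
  have pP: "prob_space P" and sP: "sets P = sets borel" and dP: "distr P borel (\<lambda>x. snd (snd x)) = \<mu>"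
    using I unfolding info_structure_def by auto
  have aeP: "AE y in P. snd (snd y) \<in> V"
  proof -
    have "AE v in distr P borel (\<lambda>x. snd (snd x)). v \<in> V" unfolding dP by (rule AE_V)
    moreover have "(\<lambda>x. snd (snd x)) \<in> P \<rightarrow>\<^sub>M (borel :: real measure)"
    proof -
      have "(\<lambda>x. snd (snd x)) \<in> (borel :: ('ts \<times> 'tb \<times> real) measure) \<rightarrow>\<^sub>M (borel :: real measure)"
        by measurable
      then show ?thesis using measurable_cong_sets[OF sP refl] by blast
    qed
    ultimately show ?thesis by (subst (asm) AE_distr_iff) auto
  qed
  have pr: "Measurable.pred (borel :: (real \<times> 'ts \<times> 'tb \<times> real) measure) (\<lambda>z. snd (snd (snd z)) \<in> V)"
    by measurable
  show ?thesis unfolding joint_Kj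
    by (subst AE_bind[OF Kj_measP[OF s sP] pr]) (use aeP in \<open>auto elim!: eventually_mono intro: Kj_last[OF s, THEN eventually_mono]\<close>)
qed

lemma P0_prod_int:
  fixes a k :: "real \<Rightarrow> real"
  assumes s: "\<sigma> \<in> borel \<rightarrow>\<^sub>M prob_algebra borel"
    and am[measurable]: "a \<in> borel_measurable borel" and ab: "\<And>p. \<bar>a p\<bar> \<le> 1"
    and km[measurable]: "k \<in> borel_measurable borel" and kb: "\<And>v. \<bar>k v\<bar> \<le> B"
  shows "(\<integral>x. a (fst x) * k (snd (snd (snd x))) \<partial>joint P0 \<sigma>) = (\<integral>p. a p \<partial>\<sigma> 0) * (\<integral>v. k v \<partial>\<mu>)"
proof -
  have hm: "(\<lambda>x::real \<times> real \<times> real \<times> real. a (fst x) * k (snd (snd (snd x)))) \<in> borel_measurable borel"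
    by measurable
  have B0: "0 \<le> B" using kb[of 0] by linarith
  have hb: "\<bar>a (fst x) * k (snd (snd (snd x)))\<bar> \<le> B" for x :: "real \<times> real \<times> real \<times> real"
  proof -
    have "\<bar>a (fst x) * k (snd (snd (snd x)))\<bar> \<le> 1 * B"
      unfolding abs_mult by (rule mult_mono) (use ab kb B0 in auto)
    then show ?thesis by simp
  qed
  have "(\<integral>x. a (fst x) * k (snd (snd (snd x))) \<partial>joint P0 \<sigma>) = (\<integral>y. (\<integral>p. a p * k (snd (snd y)) \<partial>\<sigma> (fst y)) \<partial>P0)"
    using joint_integral[OF s P0_info(3,2) hm hb] by simp
  also have "\<dots> = (\<integral>y. (\<integral>p. a p \<partial>\<sigma> (fst y)) * k (snd (snd y)) \<partial>P0)"
    by (simp add: integral_mult_left_zero)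
  also have "\<dots> = (\<integral>v. (\<integral>p. a p \<partial>\<sigma> 0) * k v \<partial>\<mu>)"
  proof -
    have gm: "(\<lambda>y::real \<times> real \<times> real. (\<integral>p. a p \<partial>\<sigma> (fst y)) * k (snd (snd y))) \<in> borel_measurable borel"
    proof -
      have "(\<lambda>y::real \<times> real \<times> real. (\<integral>p. a p \<partial>\<sigma> (fst y))) \<in> borel_measurable borel"
        using measurable_comp[OF measurable_comp[OF fst_borel measurable_prob_algebraD[OF s]] integral_measurable_subprob_algebra[OF am]]
        by (simp add: comp_def)
      then show ?thesis by measurable
    qed
    show ?thesis unfolding P0_def by (subst integral_distr[OF P0_meas gm]) simp
  qed
  also have "\<dots> = (\<integral>p. a p \<partial>\<sigma> 0) * (\<integral>v. k v \<partial>\<mu>)" by simp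
  finally show ?thesis .
qed


lemma int_clamp_mu: "(\<integral>v. clampV v \<partial>\<mu>) = Ev"
  unfolding Ev_def
proof (rule integral_cong_AE)
  show "clampV \<in> borel_measurable \<mu>" using clampV_meas measurable_cong_sets[OF mu_sets refl] by blast
  show "(\<lambda>v. v) \<in> borel_measurable \<mu>" by (rule measurable_ident_sets[OF mu_sets])
qed (use AE_V in \<open>auto simp: clampV_def\<close>)

lemma P0_pay:
  fixes a :: "real \<Rightarrow> real" and \<sigma> :: "real \<Rightarrow> real measure"
  assumes s: "\<sigma> \<in> borel \<rightarrow>\<^sub>M prob_algebra borel"
    and am[measurable]: "a \<in> borel_measurable borel" and a01: "\<And>p. 0 \<le> a p \<and> a p \<le> 1"
  shows "integrable (joint P0 \<sigma>) (seller_integrand V c (\<lambda>x. a (fst x))) \<longleftrightarrow> integrable (\<sigma> 0) (\<lambda>p. a p * (p - Ec))"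
    and "integrable (\<sigma> 0) (\<lambda>p. a p * (p - Ec)) \<Longrightarrow> seller_payoff V c P0 \<sigma> (\<lambda>x. a (fst x)) = (\<integral>p. a p * (p - Ec) \<partial>\<sigma> 0)"
    and "integrable (\<sigma> 0) (\<lambda>p. a p * (p - Ec)) \<Longrightarrow> buyer_payoff P0 \<sigma> (\<lambda>x. a (fst x)) = (\<integral>p. a p * (Ev - p) \<partial>\<sigma> 0)"
proof -
  define J where "J = joint P0 \<sigma>"
  have pJ: "prob_space J" and sJ: "sets J = sets borel" using joint_prob[OF s P0_info(3,2)] J_def by auto
  interpret J: prob_space J by (rule pJ)
  have measJ: "\<And>f. f \<in> borel_measurable borel \<Longrightarrow> f \<in> borel_measurable J"
    using measurable_cong_sets[OF sJ refl] by blast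
  have s0: "\<sigma> 0 \<in> space (prob_algebra borel)" using measurable_space[OF s] by simp
  then have ps0: "prob_space (\<sigma> 0)" and ss0: "sets (\<sigma> 0) = sets borel" by (auto simp: space_prob_algebra)
  interpret S0: prob_space "\<sigma> 0" by (rule ps0)
  interpret M: prob_space \<mu> by (rule mu_prob)
  have dJ: "distr J borel fst = \<sigma> 0" using P0_fst[OF s] J_def by simp
  have fstm: "fst \<in> J \<rightarrow>\<^sub>M (borel :: real measure)" using measJ[OF fst_borel] .
  have ab: "\<And>p. \<bar>a p\<bar> \<le> 1" using a01 by (simp add: abs_le_iff)
  have intfst: "integrable J (\<lambda>x. g (fst x)) \<longleftrightarrow> integrable (\<sigma> 0) g" if gm: "g \<in> borel_measurable borel" for g :: "real \<Rightarrow> real"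
    using integrable_distr_eq[OF fstm gm] dJ by simp
  have intfst': "(\<integral>x. g (fst x) \<partial>J) = (\<integral>p. g p \<partial>\<sigma> 0)" if gm: "g \<in> borel_measurable borel" for g :: "real \<Rightarrow> real"
    using integral_distr[OF fstm gm] dJ by simp
  define As where "As = (\<lambda>p. a p * (p - Ec))"
  define Ab where "Ab = (\<lambda>p. a p * (Ev - p))"
  define Hs where "Hs = (\<lambda>x::real \<times> real \<times> real \<times> real. a (fst x) * (Ec - costV V c (snd (snd (snd x)))))"
  define Hb where "Hb = (\<lambda>x::real \<times> real \<times> real \<times> real. a (fst x) * (clampV (snd (snd (snd x))) - Ev))"
  have Asm[measurable]: "As \<in> borel_measurable borel" unfolding As_def by measurable
  have Abm[measurable]: "Ab \<in> borel_measurable borel" unfolding Ab_def by measurable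
  have Hsm: "Hs \<in> borel_measurable borel" unfolding Hs_def by measurable
  have Hbm: "Hb \<in> borel_measurable borel" unfolding Hb_def by measurable
  have kb1: "\<bar>Ec - costV V c v\<bar> \<le> \<bar>Ec\<bar> + Bc" for v using costV_bound[of v] by simp
  have kb2: "\<bar>clampV v - Ev\<bar> \<le> Bv + \<bar>Ev\<bar>" for v using clampV_bound[of v] by simp
  have iHs: "integrable J Hs"
  proof (rule J.integrable_const_bound[where B="\<bar>Ec\<bar> + Bc"])
    show "AE x in J. norm (Hs x) \<le> \<bar>Ec\<bar> + Bc"
    proof (rule AE_I2)
      fix x :: "real \<times> real \<times> real \<times> real"
      have "\<bar>Hs x\<bar> \<le> 1 * (\<bar>Ec\<bar> + Bc)" unfolding Hs_def abs_mult
        by (rule mult_mono) (use ab kb1 in auto)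
      then show "norm (Hs x) \<le> \<bar>Ec\<bar> + Bc" by simp
    qed
  qed (use measJ[OF Hsm] in auto)
  have iHb: "integrable J Hb"
  proof (rule J.integrable_const_bound[where B="Bv + \<bar>Ev\<bar>"])
    show "AE x in J. norm (Hb x) \<le> Bv + \<bar>Ev\<bar>"
    proof (rule AE_I2)
      fix x :: "real \<times> real \<times> real \<times> real"
      have "\<bar>Hb x\<bar> \<le> 1 * (Bv + \<bar>Ev\<bar>)" unfolding Hb_def abs_mult
        by (rule mult_mono) (use ab kb2 in auto)
      then show "norm (Hb x) \<le> Bv + \<bar>Ev\<bar>" by simp
    qed
  qed (use measJ[OF Hbm] in auto)
  have IHs: "integral\<^sup>L J Hs = 0"
  proof -
    have k1: "(\<lambda>v. Ec - costV V c v) \<in> borel_measurable borel" by measurable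
    have "integral\<^sup>L J Hs = (\<integral>p. a p \<partial>\<sigma> 0) * (\<integral>v. Ec - costV V c v \<partial>\<mu>)"
      unfolding Hs_def J_def by (rule P0_prod_int[OF s am ab k1 kb1])
    also have "(\<integral>v. Ec - costV V c v \<partial>\<mu>) = 0"
      using Bochner_Integration.integral_diff[OF M.integrable_const int_mu_cost] M.prob_space
      by (simp add: Ec_def)
    finally show ?thesis by simp
  qed
  have IHb: "integral\<^sup>L J Hb = 0"
  proof -
    have k1: "(\<lambda>v. clampV v - Ev) \<in> borel_measurable borel" by measurable
    have "integral\<^sup>L J Hb = (\<integral>p. a p \<partial>\<sigma> 0) * (\<integral>v. clampV v - Ev \<partial>\<mu>)"
      unfolding Hb_def J_def by (rule P0_prod_int[OF s am ab k1 kb2])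
    also have "(\<integral>v. clampV v - Ev \<partial>\<mu>) = 0"
    proof -
      have mc: "clampV \<in> borel_measurable \<mu>" using clampV_meas measurable_cong_sets[OF mu_sets refl] by blast
      have ic: "integrable \<mu> clampV"
        by (rule M.integrable_const_bound[where B=Bv]) (use clampV_bound mc in auto)
      show ?thesis
        using Bochner_Integration.integral_diff[OF ic M.integrable_const] M.prob_space int_clamp_mu
        by simp
    qed
    finally show ?thesis by simp
  qed
  have seq: "seller_integrand V c (\<lambda>x. a (fst x)) = (\<lambda>x. As (fst x) + Hs x)"
    by (auto simp: fun_eq_iff seller_integrand_def As_def Hs_def split_beta' algebra_simps)
  have sm: "seller_integrand V c (\<lambda>x. a (fst x)) \<in> borel_measurable J"
    unfolding seq using measJ[OF Hsm] measJ[OF Asm[THEN measurable_comp[OF fst_borel]]] by (simp add: comp_def)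
  show i1: "integrable J (seller_integrand V c (\<lambda>x. a (fst x))) \<longleftrightarrow> integrable (\<sigma> 0) (\<lambda>p. a p * (p - Ec))"
  proof
    assume "integrable J (seller_integrand V c (\<lambda>x. a (fst x)))"
    then have "integrable J (\<lambda>x. seller_integrand V c (\<lambda>x. a (fst x)) x - Hs x)"
      using iHs by (rule Bochner_Integration.integrable_diff)
    then have "integrable J (\<lambda>x. As (fst x))" unfolding seq by simp
    then show "integrable (\<sigma> 0) (\<lambda>p. a p * (p - Ec))" using intfst[OF Asm] As_def by simp
  next
    assume "integrable (\<sigma> 0) (\<lambda>p. a p * (p - Ec))"
    then have "integrable J (\<lambda>x. As (fst x))" using intfst[OF Asm] As_def by simp
    then show "integrable J (seller_integrand V c (\<lambda>x. a (fst x)))"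
      unfolding seq using iHs by (rule Bochner_Integration.integrable_add)
  qed
  assume iA: "integrable (\<sigma> 0) (\<lambda>p. a p * (p - Ec))"
  then have iAJ: "integrable J (\<lambda>x. As (fst x))" using intfst[OF Asm] As_def by simp
  show "seller_payoff V c P0 \<sigma> (\<lambda>x. a (fst x)) = (\<integral>p. a p * (p - Ec) \<partial>\<sigma> 0)"
    unfolding seller_payoff_def J_def[symmetric] seq
    using Bochner_Integration.integral_add[OF iAJ iHs] IHs intfst'[OF Asm] As_def by simp
  have iAb: "integrable (\<sigma> 0) Ab"
  proof -
    have "integrable (\<sigma> 0) (\<lambda>p. a p * (Ev - Ec) - a p * (p - Ec))"
    proof (rule Bochner_Integration.integrable_diff[OF _ iA])
      show "integrable (\<sigma> 0) (\<lambda>p. a p * (Ev - Ec))"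
      proof (rule S0.integrable_const_bound[where B="\<bar>Ev - Ec\<bar>"])
        have "(\<lambda>p. a p * (Ev - Ec)) \<in> borel_measurable borel" by measurable
        then show "(\<lambda>p. a p * (Ev - Ec)) \<in> borel_measurable (\<sigma> 0)" using measurable_cong_sets[OF ss0 refl] by blast
      qed (use ab in \<open>auto simp: abs_mult intro!: mult_left_le_one_le\<close>)
    qed
    then show ?thesis unfolding Ab_def by (simp add: algebra_simps)
  qed
  then have iAbJ: "integrable J (\<lambda>x. Ab (fst x))" using intfst[OF Abm] by simp
  have bm: "buyer_integrand (\<lambda>x. a (fst x)) \<in> borel_measurable J"
    by (rule measJ) (unfold buyer_integrand_def split_beta', measurable)
  have aeb: "AE x in J. buyer_integrand (\<lambda>x. a (fst x)) x = Ab (fst x) + Hb x"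
    using aeJ_gen[OF P0_info(1) s] unfolding J_def[symmetric]
    by (rule eventually_mono) (auto simp: buyer_integrand_def Ab_def Hb_def clampV_def split_beta' algebra_simps)
  show "buyer_payoff P0 \<sigma> (\<lambda>x. a (fst x)) = (\<integral>p. a p * (Ev - p) \<partial>\<sigma> 0)"
  proof -
    have "buyer_payoff P0 \<sigma> (\<lambda>x. a (fst x)) = (\<integral>x. Ab (fst x) + Hb x \<partial>J)"
      unfolding buyer_payoff_def J_def[symmetric]
      by (rule integral_cong_AE[OF bm _ aeb]) (use measJ[OF Hbm] measJ[OF Abm[THEN measurable_comp[OF fst_borel]]] in \<open>simp add: comp_def\<close>)
    also have "\<dots> = (\<integral>p. Ab p \<partial>\<sigma> 0)"
      using Bochner_Integration.integral_add[OF iAbJ iHb] IHb intfst'[OF Abm] by simp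
    finally show ?thesis unfolding Ab_def .
  qed
qed


lemma lower:
  assumes T: "(pb, ps) \<in> target_set \<mu> V c"
  shows "(pb, ps) \<in> eq_payoffs V c P0"
proof -
  have pb0: "0 \<le> pb" and psfl: "fl \<le> ps" and sumS: "pb + ps \<le> S"
    using T unfolding target_set_def fl_def S_def by auto
  interpret M: prob_space \<mu> by (rule mu_prob)
  have fl0: "0 \<le> fl" and flI: "Inf V - Ec \<le> fl" using fl_eq by auto
  have SE: "S = Ev - Ec" by (rule S_eq)
  have Sp: "0 < S" by (rule S_gt)
  define p1 where "p1 = Ec + ps"
  define q where "q = ps / S"
  define lam where "lam = (if ps = S then 0 else pb / (S - ps))"
  have ps0: "0 \<le> ps" using fl0 psfl by simp
  have psS: "ps \<le> S" using sumS pb0 by simp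
  have q01: "0 \<le> q" "q \<le> 1" using ps0 psS Sp unfolding q_def by auto
  have qS: "q * S = ps" using Sp unfolding q_def by simp
  have lam01: "0 \<le> lam" "lam \<le> 1"
    using pb0 psS sumS unfolding lam_def by (auto simp: divide_le_eq_1)
  have lamS: "lam * (S - ps) = pb" using pb0 psS sumS unfolding lam_def by auto
  have p1Ev: "p1 \<le> Ev" using psS SE unfolding p1_def by simp
  define a where "a = (\<lambda>p::real. if p = Ev then q else if p \<le> Inf V \<or> p = p1 then 1 else 0)"
  have am[measurable]: "a \<in> borel_measurable borel" unfolding a_def by measurable
  have a01: "0 \<le> a p \<and> a p \<le> 1" for p using q01 unfolding a_def by auto
  have abound: "a p * (p - Ec) \<le> ps" for p
  proof -
    consider "p = Ev" | "p \<noteq> Ev" "p \<le> Inf V" | "p \<noteq> Ev" "p = p1" | "p \<noteq> Ev" "\<not> p \<le> Inf V" "p \<noteq> p1" by blast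
    then show ?thesis
    proof cases
      case 1 then show ?thesis using qS SE unfolding a_def by simp
    next
      case 2 then show ?thesis using flI psfl unfolding a_def by simp
    next
      case 3 then show ?thesis unfolding a_def p1_def by simp
    next
      case 4 then show ?thesis using ps0 unfolding a_def by simp
    qed
  qed
  have ap1: "a p1 * (p1 - Ec) = ps" and ap1b: "a p1 * (Ev - p1) = S - ps"
  proof -
    show "a p1 * (p1 - Ec) = ps"
    proof (cases "p1 = Ev")
      case True
      then have "ps = S" using SE unfolding p1_def by simp
      then have "q = 1" using Sp unfolding q_def by simp
      then show ?thesis using True unfolding a_def p1_def by simp
    next
      case False then show ?thesis unfolding a_def p1_def by simp
    qed
    show "a p1 * (Ev - p1) = S - ps"
    proof (cases "p1 = Ev")
      case True
      then have "ps = S" using SE unfolding p1_def by simp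
      then show ?thesis using True by simp
    next
      case False then show ?thesis unfolding a_def p1_def using SE by simp
    qed
  qed
  have aEv: "a Ev * (Ev - Ec) = ps" and aEvb: "a Ev * (Ev - Ev) = 0"
    using qS SE unfolding a_def by auto
  define f where "f = (\<lambda>b::bool. if b then p1 else Ev)"
  define \<sigma>0 where "\<sigma>0 = distr (measure_pmf (bernoulli_pmf lam)) (borel :: real measure) f"
  have fm: "f \<in> measure_pmf (bernoulli_pmf lam) \<rightarrow>\<^sub>M (borel :: real measure)" by simp
  have ps0': "prob_space \<sigma>0" unfolding \<sigma>0_def by (rule prob_space.prob_space_distr[OF prob_space_measure_pmf fm])
  have ss0: "sets \<sigma>0 = sets borel" unfolding \<sigma>0_def by simp
  have s0sp: "\<sigma>0 \<in> space (prob_algebra borel)" using ps0' ss0 by (simp add: space_prob_algebra)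
  have int0: "integrable \<sigma>0 g" if "g \<in> borel_measurable borel" for g :: "real \<Rightarrow> real"
    unfolding \<sigma>0_def using that
    by (subst integrable_distr_eq[OF fm]) (auto intro!: integrable_measure_pmf_finite)
  have I0: "(\<integral>p. g p \<partial>\<sigma>0) = g p1 * lam + g Ev * (1 - lam)" if "g \<in> borel_measurable borel" for g :: "real \<Rightarrow> real"
    unfolding \<sigma>0_def using that lam01 by (subst integral_distr[OF fm]) (auto simp: f_def)
  have ae0: "AE p in \<sigma>0. p = p1 \<or> p = Ev"
    unfolding \<sigma>0_def by (subst AE_distr_iff[OF fm]) (auto simp: f_def)
  define \<sigma> where "\<sigma> = (\<lambda>_::real. \<sigma>0)"
  have s: "\<sigma> \<in> borel \<rightarrow>\<^sub>M prob_algebra borel" unfolding \<sigma>_def using s0sp by simp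
  define \<alpha> where "\<alpha> = (\<lambda>x::real \<times> real. a (fst x))"
  define \<nu> where "\<nu> = (\<lambda>x::real \<times> real. if fst x = p1 \<or> fst x = Ev then \<mu> else return borel (Inf V))"
  have musp: "\<mu> \<in> space (prob_algebra borel)" using mu_prob mu_sets by (simp add: space_prob_algebra)
  have retsp: "return (borel :: real measure) (Inf V) \<in> space (prob_algebra borel)"
    by (simp add: space_prob_algebra prob_space_return)
  have n: "\<nu> \<in> borel \<rightarrow>\<^sub>M prob_algebra borel"
    unfolding \<nu>_def by (rule measurable_If) (use musp retsp in auto)
  have muV: "measure \<mu> V = 1" using M.AE_in_set_eq_1[of V] AE_V mu_sets by simp
  have nV: "measure (\<nu> x) V = 1" for x
    unfolding \<nu>_def using muV infV by (auto simp: measure_return)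
  have nE: "(\<integral>v. v \<partial>\<nu> (p, tb)) = (if p = p1 \<or> p = Ev then Ev else Inf V)" for p tb
    unfolding \<nu>_def Ev_def by (auto simp: integral_return)
  have iA0: "integrable (\<sigma> 0) (\<lambda>p. a p * (p - Ec))" unfolding \<sigma>_def by (rule int0) simp
  note PP = P0_pay[OF s am a01]
  have spay: "seller_payoff V c P0 \<sigma> \<alpha> = ps"
  proof -
    have "seller_payoff V c P0 \<sigma> \<alpha> = (\<integral>p. a p * (p - Ec) \<partial>\<sigma>0)"
      using PP(2)[OF iA0] unfolding \<alpha>_def \<sigma>_def by simp
    also have "\<dots> = ps * lam + ps * (1 - lam)" using I0[of "\<lambda>p. a p * (p - Ec)"] ap1 aEv by simp
    also have "\<dots> = ps" by (simp add: algebra_simps)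
    finally show ?thesis .
  qed
  have bpay: "buyer_payoff P0 \<sigma> \<alpha> = pb"
  proof -
    have "buyer_payoff P0 \<sigma> \<alpha> = (\<integral>p. a p * (Ev - p) \<partial>\<sigma>0)"
      using PP(3)[OF iA0] unfolding \<alpha>_def \<sigma>_def by simp
    also have "\<dots> = (S - ps) * lam" using I0[of "\<lambda>p. a p * (Ev - p)"] ap1b aEvb by simp
    also have "\<dots> = pb" using lamS by (simp add: algebra_simps)
    finally show ?thesis .
  qed
  have W: "wPBE V c P0 \<sigma> \<alpha> \<nu>"
    unfolding wPBE_def
  proof (intro conjI allI impI)
    show "seller_strategy \<sigma>" unfolding seller_strategy_def by (rule s)
    show "\<alpha> \<in> borel_measurable borel" unfolding \<alpha>_def by measurable
    show "0 \<le> \<alpha> x" "\<alpha> x \<le> 1" for x unfolding \<alpha>_def using a01 by auto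
    show "\<nu> \<in> borel \<rightarrow>\<^sub>M prob_algebra borel" by (rule n)
    show "measure (\<nu> x) V = 1" for x by (rule nV)
    show "\<alpha> (p, tb) = 1" if "p < (\<integral>v. v \<partial>\<nu> (p, tb))" for p tb
      using that p1Ev unfolding nE \<alpha>_def a_def by (auto split: if_splits)
    show "\<alpha> (p, tb) = 0" if "(\<integral>v. v \<partial>\<nu> (p, tb)) < p" for p tb
      using that p1Ev unfolding nE \<alpha>_def a_def by (auto split: if_splits)
    show "integrable (joint P0 \<sigma>) (seller_integrand V c \<alpha>)"
      using PP(1) iA0 unfolding \<alpha>_def by simp
    show "seller_payoff V c P0 \<sigma>' \<alpha> \<le> seller_payoff V c P0 \<sigma> \<alpha>"
      if "seller_strategy \<sigma>' \<and> integrable (joint P0 \<sigma>') (seller_integrand V c \<alpha>)" for \<sigma>'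
    proof -
      have s': "\<sigma>' \<in> borel \<rightarrow>\<^sub>M prob_algebra borel" using that unfolding seller_strategy_def by simp
      note PP' = P0_pay[OF s' am a01]
      have i': "integrable (\<sigma>' 0) (\<lambda>p. a p * (p - Ec))" using PP'(1) that unfolding \<alpha>_def by simp
      have "\<sigma>' 0 \<in> space (prob_algebra borel)" using measurable_space[OF s'] by simp
      then have p': "prob_space (\<sigma>' 0)" by (simp add: space_prob_algebra)
      interpret S': prob_space "\<sigma>' 0" by (rule p')
      have "seller_payoff V c P0 \<sigma>' \<alpha> = (\<integral>p. a p * (p - Ec) \<partial>\<sigma>' 0)"
        using PP'(2)[OF i'] unfolding \<alpha>_def by simp
      also have "\<dots> \<le> (\<integral>p. ps \<partial>\<sigma>' 0)"
        by (rule integral_mono[OF i' S'.integrable_const]) (use abound in auto)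
      also have "\<dots> = ps" using S'.prob_space by simp
      finally show ?thesis using spay by simp
    qed
    show "belief_joint P0 \<sigma> \<nu> = joint P0 \<sigma>"
    proof -
      define X where "X = \<sigma>0 \<bind> (\<lambda>p. \<mu> \<bind> (\<lambda>w. return (borel :: (real \<times> real \<times> real \<times> real) measure) (p, 0, 0, w)))"
      have gmu: "(\<lambda>p. \<mu> \<bind> (\<lambda>w. return (borel :: (real \<times> real \<times> real \<times> real) measure) (p, 0, 0, w))) \<in> (borel :: real measure) \<rightarrow>\<^sub>M prob_algebra borel"
        using inner_meas[of "\<lambda>_. \<mu>" "(0::real, 0::real, 0::real)"] musp by simp
      have fnu: "(\<lambda>p. \<nu> (p, 0) \<bind> (\<lambda>w. return (borel :: (real \<times> real \<times> real \<times> real) measure) (p, 0, 0, w))) \<in> (borel :: real measure) \<rightarrow>\<^sub>M prob_algebra borel"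
        using inner_meas[OF n, of "(0::real, 0::real, 0::real)"] by simp
      have Xp: "prob_space X" unfolding X_def by (rule prob_space_bind'[OF s0sp gmu])
      have ne: "space \<mu> \<noteq> {}" by simp
      have "belief_joint P0 \<sigma> \<nu> = \<mu> \<bind> (\<lambda>v. Kb \<sigma> \<nu> (0, 0, v))"
        unfolding belief_Kb P0_def
        by (rule bind_distr[OF P0_meas measurable_prob_algebraD[OF Kb_meas[OF s n]] ne])
      also have "\<dots> = \<mu> \<bind> (\<lambda>v. X)"
      proof (intro bind_cong refl)
        fix v
        have "Kb \<sigma> \<nu> (0, 0, v) = \<sigma>0 \<bind> (\<lambda>p. \<nu> (p, 0) \<bind> (\<lambda>w. return borel (p, 0, 0, w)))"
          unfolding Kb_def \<sigma>_def by simp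
        also have "\<dots> = X" unfolding X_def
          by (rule bind_cong_AE'[OF s0sp fnu gmu]) (use ae0 in \<open>auto simp: \<nu>_def elim!: eventually_mono\<close>)
        finally show "Kb \<sigma> \<nu> (0, 0, v) = X" .
      qed
      also have "\<dots> = X" by (rule bind_const'[OF mu_prob prob_space_imp_subprob_space[OF Xp]])
      finally have B: "belief_joint P0 \<sigma> \<nu> = X" .
      have "joint P0 \<sigma> = \<mu> \<bind> (\<lambda>v. Kj \<sigma> (0, 0, v))"
        unfolding joint_Kj P0_def
        by (rule bind_distr[OF P0_meas measurable_prob_algebraD[OF Kj_meas[OF s]] ne])
      also have "\<dots> = \<mu> \<bind> (\<lambda>v. \<sigma>0 \<bind> (\<lambda>p. return (borel :: (real \<times> real \<times> real \<times> real) measure) (p, 0, 0, v)))"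
        unfolding Kj_def \<sigma>_def by simp
      also have "\<dots> = X"
      proof -
        interpret PP: pair_prob_space \<mu> \<sigma>0
          unfolding pair_prob_space_def pair_sigma_finite_def using mu_prob ps0'
          by (auto intro: prob_space_imp_sigma_finite)
        have m: "(\<lambda>(x::real, y::real). (y, 0::real, 0::real, x)) \<in> (borel :: real measure) \<Otimes>\<^sub>M (borel :: real measure) \<rightarrow>\<^sub>M (borel :: (real \<times> real \<times> real \<times> real) measure)"
        proof -
          have "(\<lambda>(x::real, y::real). (y, 0::real, 0::real, x)) \<in> (borel :: real measure) \<Otimes>\<^sub>M (borel :: real measure) \<rightarrow>\<^sub>M (borel \<Otimes>\<^sub>M (borel \<Otimes>\<^sub>M (borel \<Otimes>\<^sub>M borel)) :: (real \<times> real \<times> real \<times> real) measure)"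
            by measurable
          then show ?thesis by (simp add: borel_prod)
        qed
        have C: "(\<lambda>(x, y). return (borel :: (real \<times> real \<times> real \<times> real) measure) (y, 0, 0, x)) \<in> \<mu> \<Otimes>\<^sub>M \<sigma>0 \<rightarrow>\<^sub>M subprob_algebra borel"
        proof -
          have "(\<lambda>(x, y). return (borel :: (real \<times> real \<times> real \<times> real) measure) (y, 0, 0, x)) \<in> (borel :: real measure) \<Otimes>\<^sub>M (borel :: real measure) \<rightarrow>\<^sub>M subprob_algebra borel"
            using measurable_comp[OF m return_measurable] by (simp add: comp_def split_beta')
          then show ?thesis using measurable_cong_sets[OF sets_pair_measure_cong[OF mu_sets ss0] refl] by blast
        qed
        show ?thesis unfolding X_def using PP.bind_rotate[OF C] by simp
      qed
      finally show ?thesis using B by simp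
    qed
  qed
  show ?thesis unfolding eq_payoffs_def using W bpay spay by force
qed

end

theorem theorem1:
  fixes V :: "real set" and \<mu> :: "real measure" and c :: "real \<Rightarrow> real"
  assumes "prob_space \<mu>" and "sets \<mu> = sets borel"
    and "compact V" and "V \<noteq> {}" and "Inf V < Sup V"
    and "support_of \<mu> = V"
    and "continuous_on V c"
    and "\<forall>v\<in>V. v - c v \<ge> 0"
    and "surplus \<mu> V c > 0"
  shows "all_eq_payoffs \<mu> V c = target_set \<mu> V c \<and>
    (\<forall>P :: ('ts::polish_space \<times> 'tb::polish_space \<times> real) measure.
       info_structure \<mu> P \<longrightarrow> eq_payoffs V c P \<subseteq> target_set \<mu> V c)"
proof -
  interpret E: env V \<mu> c
    by (rule env.intro) (use assms in auto)
  have up: "eq_payoffs V c P \<subseteq> target_set \<mu> V c"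
    if "info_structure \<mu> P" for P :: "('ta::polish_space \<times> 'tc::polish_space \<times> real) measure"
    using E.upper[OF that] unfolding eq_payoffs_def by blast
  have "all_eq_payoffs \<mu> V c \<subseteq> target_set \<mu> V c"
    unfolding all_eq_payoffs_def using up by blast
  moreover have "target_set \<mu> V c \<subseteq> all_eq_payoffs \<mu> V c"
  proof
    fix x assume x: "x \<in> target_set \<mu> V c"
    obtain pb ps where "x = (pb, ps)" by (cases x)
    with x have "x \<in> eq_payoffs V c E.P0" using E.lower by simp
    then show "x \<in> all_eq_payoffs \<mu> V c" unfolding all_eq_payoffs_def using E.P0_info(1) by blast
  qed
  ultimately show ?thesis using up by blast
qed

end
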